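(* For all $z$ with $0<|z|\le 1$, \[ \sum_{k=1}^\infty\frac{(-1)^{k-1}\zeta(2k)z^{2k}}{(2k+1)(k+1)} = -\frac12-\frac{\pi z}{6}-\frac{\pi}{12z}-\frac{\zeta(3)}{2\pi^2z^2}+\frac{\operatorname{Li}_3(e^{2\pi z})}{2\pi^2z^2}-\frac{\operatorname{Li}_2(e^{2\pi z})}{2\pi z}. \]
   Context: $\zeta$ is the Riemann zeta function. $\operatorname{Li}_s(x)=\sum_{k\ge1}x^k/k^s$ is the polylogarithm (analytically continued to the complex plane). *)

theory Defs
  imports "HOL-Complex_Analysis.Complex_Analysis"
begin

text \<open>This agrees with the
  Riemann zeta function on the half-plane Re s > 1, which contains every
  argument used in the statement (the even integers 2k with k \<ge> 1, and 3).\<close>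
definition zeta :: "complex \<Rightarrow> complex" where
  "zeta s = (\<Sum>n. 1 / (of_nat (Suc n)) powr s)"

text \<open>Polylogarithm Li_n for integer order n \<ge> 1, principal branch
  (analytic continuation of the power series to the plane cut along [1,\<infinity>)):
  Li_1(w) = -Ln(1-w), and Li_(n+1)(w) = integral of Li_n(t)/t along the segment
  from 0 to w. On the unit disc this equals the series sum of w^k/k^n.\<close>
fun polylog :: "nat \<Rightarrow> complex \<Rightarrow> complex" where
  "polylog 0 w = w / (1 - w)"
| "polylog (Suc 0) w = - Ln (1 - w)"
| "polylog (Suc (Suc n)) w =
     contour_integral (linepath 0 w) (\<lambda>t. polylog (Suc n) t / t)"

end

theory Submission
  imports Defs "HOL-Real_Asymp.Real_Asymp"
begin

definition slit :: "complex set" where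
  "slit = - {w. Im w = 0 \<and> 1 \<le> Re w}"

lemma open_slit: "open slit"
proof -
  have "closed {w::complex. Im w = 0 \<and> 1 \<le> Re w}"
    by (intro closed_Collect_conj closed_Collect_eq closed_Collect_le continuous_intros)
  thus ?thesis unfolding slit_def by (simp add: open_Compl)
qed

lemma zero_in_slit [simp]: "0 \<in> slit"
  by (simp add: slit_def)

lemma slit_segment: assumes "w \<in> slit" shows "closed_segment 0 w \<subseteq> slit"
proof
  fix u assume "u \<in> closed_segment 0 w"
  then obtain t where t: "0 \<le> t" "t \<le> 1" "u = of_real t * w"
    by (auto simp: closed_segment_def scaleR_conv_of_real)
  show "u \<in> slit"
  proof (rule ccontr)
    assume "u \<notin> slit"
    hence u: "Im u = 0" "1 \<le> Re u" by (auto simp: slit_def)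
    have Re: "Re u = t * Re w" "Im u = t * Im w" using t by simp_all
    have "t > 0" using u Re t by (cases "t = 0") auto
    hence "Im w = 0" using u Re by simp
    moreover have "Re w \<ge> 1"
    proof (rule ccontr)
      assume "\<not> Re w \<ge> 1"
      hence "t * Re w < 1 * 1" using t
        by (metis le_less_trans linorder_not_le mult_le_cancel_right1 mult.right_neutral mult_less_cancel_left_pos \<open>t > 0\<close>)
      thus False using u Re by simp
    qed
    ultimately show False using assms by (simp add: slit_def)
  qed
qed

lemma starlike_slit: "starlike slit"
  unfolding starlike_def
  by (rule bexI[of _ 0]) (use slit_segment in auto)

lemma slit_ball: "cball 0 1 - {1} \<subseteq> slit"
proof
  fix w :: complex assume w: "w \<in> cball 0 1 - {1}"
  show "w \<in> slit"
  proof (rule ccontr)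
    assume "w \<notin> slit"
    hence "Im w = 0" "1 \<le> Re w" by (auto simp: slit_def)
    moreover have "norm w \<le> 1" using w by (simp add: dist_norm)
    hence "Re w \<le> 1" using complex_Re_le_cmod[of w] by linarith
    ultimately have "w = 1" by (simp add: complex_eq_iff)
    thus False using w by simp
  qed
qed

lemma slit_not_nonpos: "w \<in> slit \<Longrightarrow> 1 - w \<notin> \<real>\<^sub>\<le>\<^sub>0"
  by (auto simp: slit_def complex_nonpos_Reals_iff)

lemma polylog1_deriv:
  assumes "x \<in> slit"
  shows "(polylog (Suc 0) has_field_derivative (if x = 0 then 1 else polylog 0 x / x)) (at x)"
proof -
  have "x \<noteq> 1" using assms by (auto simp: slit_def)
  have d: "((\<lambda>w. - Ln (1 - w)) has_field_derivative (- (inverse (1 - x) * (-1)))) (at x)"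
    by (intro derivative_eq_intros has_field_derivative_Ln slit_not_nonpos assms) auto
  have e: "- (inverse (1 - x) * (-1)) = (if x = 0 then 1 else polylog 0 x / x)"
    using \<open>x \<noteq> 1\<close> by (auto simp: field_simps)
  have eq: "polylog (Suc 0) = (\<lambda>w. - Ln (1 - w))" by (simp add: fun_eq_iff)
  show ?thesis unfolding eq by (rule DERIV_cong[OF d e])
qed

lemma contour_integral_linepath_0_cong:
  assumes "\<And>t. t \<noteq> 0 \<Longrightarrow> f t = g t"
  shows "contour_integral (linepath 0 x) f = contour_integral (linepath 0 x) g"
proof (cases "x = 0")
  case True thus ?thesis by simp
next
  case False
  have "(f has_contour_integral i) (linepath 0 x) \<longleftrightarrow> (g has_contour_integral i) (linepath 0 x)" for i
    unfolding has_contour_integral_linepath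
    apply (rule has_integral_spike_finite_eq[of "{0}"], simp)
    using False by (auto simp: linepath_def assms)
  thus ?thesis unfolding contour_integral_def contour_integrable_on_def by simp
qed

lemma polylog_deriv_step:
  assumes D: "\<And>x. x \<in> slit \<Longrightarrow> (polylog (Suc n) has_field_derivative (if x = 0 then 1 else polylog n x / x)) (at x)"
      and Z: "polylog (Suc n) 0 = 0"
  shows "\<And>x. x \<in> slit \<Longrightarrow> (polylog (Suc (Suc n)) has_field_derivative (if x = 0 then 1 else polylog (Suc n) x / x)) (at x)"
    and "polylog (Suc (Suc n)) 0 = 0"
proof -
  define P where "P = polylog (Suc n)"
  define F where "F = (\<lambda>t. if t = 0 then 1 else P t / t)"
  have holP: "P holomorphic_on slit"
    unfolding P_def holomorphic_on_def using D
    by (meson field_differentiable_at_within field_differentiable_def open_slit)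
  have dP0: "deriv P 0 = 1" unfolding P_def using D[of 0] by (simp add: DERIV_imp_deriv)
  have "(\<lambda>z. if z = 0 then deriv P 0 else (P z - P 0) / (z - 0)) holomorphic_on slit"
    by (rule pole_lemma[OF holP]) (simp add: interior_open open_slit)
  also have "(\<lambda>z. if z = 0 then deriv P 0 else (P z - P 0) / (z - 0)) = F"
    using dP0 Z by (auto simp: F_def P_def fun_eq_iff)
  finally have holF: "F holomorphic_on slit" .
  hence contF: "continuous_on slit F" by (rule holomorphic_on_imp_continuous_on)
  have prim: "((\<lambda>x. contour_integral (linepath 0 x) F) has_field_derivative F x) (at x)" if x: "x \<in> slit" for x
  proof (rule triangle_contour_integrals_starlike_primitive[OF contF zero_in_slit open_slit x])
    show "closed_segment 0 y \<subseteq> slit" if "y \<in> slit" for y using slit_segment that .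
    fix b c assume bc: "closed_segment b c \<subseteq> slit"
    have abcs: "convex hull {0, b, c} \<subseteq> slit"
      by (rule starlike_convex_subset[OF zero_in_slit bc slit_segment])
    have "(F has_contour_integral 0) (linepath 0 b +++ linepath b c +++ linepath c 0)"
      by (rule Cauchy_theorem_triangle) (rule holomorphic_on_subset[OF holF abcs])
    thus "contour_integral (linepath 0 b) F + contour_integral (linepath b c) F + contour_integral (linepath c 0) F = 0"
      using has_chain_integral_chain_integral3 by blast
  qed
  have eq: "polylog (Suc (Suc n)) = (\<lambda>x. contour_integral (linepath 0 x) F)"
  proof
    fix x show "polylog (Suc (Suc n)) x = contour_integral (linepath 0 x) F"
      by (cases n) (auto simp: F_def P_def intro!: contour_integral_linepath_0_cong)
  qed
  show "(polylog (Suc (Suc n)) has_field_derivative (if x = 0 then 1 else polylog (Suc n) x / x)) (at x)"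
    if "x \<in> slit" for x
    using prim[OF that] unfolding eq by (simp only: F_def P_def)
  show "polylog (Suc (Suc n)) 0 = 0" unfolding eq by simp
qed

lemma polylog_deriv_all:
  "(\<forall>x\<in>slit. (polylog (Suc n) has_field_derivative (if x = 0 then 1 else polylog n x / x)) (at x))
     \<and> polylog (Suc n) 0 = 0"
proof (induction n)
  case 0
  have "polylog (Suc 0) 0 = 0" by simp
  thus ?case using polylog1_deriv by blast
next
  case (Suc n)
  thus ?case using polylog_deriv_step[of n] by blast
qed

lemma polylog_deriv:
  "x \<in> slit \<Longrightarrow> (polylog (Suc n) has_field_derivative (if x = 0 then 1 else polylog n x / x)) (at x)"
  using polylog_deriv_all by blast

lemma polylog_0 [simp]: "polylog (Suc n) 0 = 0"
  using polylog_deriv_all by blast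


lemma polylog_div_holo:
  "(\<lambda>w. if w = 0 then 1 else polylog (Suc n) w / w) holomorphic_on slit"
proof -
  define P where "P = polylog (Suc n)"
  have holP: "P holomorphic_on slit"
    unfolding P_def holomorphic_on_def using polylog_deriv
    by (meson field_differentiable_at_within field_differentiable_def open_slit)
  have dP0: "deriv P 0 = 1" unfolding P_def using polylog_deriv[of 0 n] by (simp add: DERIV_imp_deriv)
  have "(\<lambda>z. if z = 0 then deriv P 0 else (P z - P 0) / (z - 0)) holomorphic_on slit"
    by (rule pole_lemma[OF holP]) (simp add: interior_open open_slit)
  also have "(\<lambda>z. if z = 0 then deriv P 0 else (P z - P 0) / (z - 0)) =
     (\<lambda>w. if w = 0 then 1 else polylog (Suc n) w / w)"
    using dP0 by (auto simp: P_def fun_eq_iff)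
  finally show ?thesis .
qed

lemma isCont_polylog: "w \<in> slit \<Longrightarrow> isCont (polylog (Suc n)) w"
  using polylog_deriv DERIV_isCont by blast

declare polylog.simps(3) [simp del]

definition pc :: "nat \<Rightarrow> nat \<Rightarrow> complex" where
  "pc n m = (if m = 0 then 0 else 1 / of_nat m ^ n)"

definition Ser :: "nat \<Rightarrow> complex \<Rightarrow> complex" where
  "Ser n w = (\<Sum>m. pc n m * w ^ m)"

lemma norm_pc: "norm (pc n m) \<le> 1"
proof (cases "m = 0")
  case False
  hence "(1::real) \<le> real m ^ n" by (simp add: one_le_power)
  thus ?thesis by (simp add: pc_def norm_divide norm_power)
qed (simp add: pc_def)

lemma summable_pc: assumes "norm w < 1" shows "summable (\<lambda>m. pc n m * w ^ m)"
proof (rule summable_comparison_test')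
  show "summable (\<lambda>m. norm w ^ m)" using assms by (simp add: summable_geometric)
  fix m :: nat
  have "norm (pc n m * w ^ m) = norm (pc n m) * norm w ^ m" by (simp add: norm_mult norm_power)
  also have "\<dots> \<le> 1 * norm w ^ m" by (intro mult_right_mono norm_pc) simp
  finally show "norm (pc n m * w ^ m) \<le> norm w ^ m" by simp
qed

lemma norm_pc2: assumes "norm w \<le> 1" "n \<ge> 2" shows "norm (pc n m * w ^ m) \<le> inverse (real m ^ 2)"
proof (cases "m = 0")
  case False
  have "norm (pc n m * w ^ m) = norm (pc n m) * norm w ^ m" by (simp add: norm_mult norm_power)
  also have "\<dots> \<le> norm (pc n m) * 1"
    by (intro mult_left_mono) (use assms in \<open>auto simp: power_le_one\<close>)
  also have "norm (pc n m) = inverse (real m ^ n)" using False by (simp add: pc_def norm_divide norm_power field_simps)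
  also have "inverse (real m ^ n) \<le> inverse (real m ^ 2)"
    using False assms by (intro le_imp_inverse_le power_increasing) auto
  finally show ?thesis by simp
qed (simp add: pc_def)

lemma summable_pc2: assumes "norm w \<le> 1" "n \<ge> 2" shows "summable (\<lambda>m. pc n m * w ^ m)"
  by (rule summable_comparison_test'[OF inverse_power_summable[of 2]])
     (use norm_pc2[OF assms] in auto)

lemma diffs_pc: "diffs (pc (Suc n)) m = 1 / of_nat (Suc m) ^ n"
  by (simp add: diffs_def pc_def field_simps del: of_nat_Suc)

lemma Ser_0 [simp]: "Ser n 0 = 0"
  by (simp add: Ser_def pc_def)

lemma Ser_deriv:
  assumes "norm w < 1"
  shows "(Ser (Suc n) has_field_derivative (if w = 0 then 1 else Ser n w / w)) (at w)"
proof -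
  have d: "(Ser (Suc n) has_field_derivative (\<Sum>m. diffs (pc (Suc n)) m * w ^ m)) (at w)"
    unfolding Ser_def[abs_def] by (rule termdiffs_strong'[of 1]) (use assms summable_pc in auto)
  have sm: "summable (\<lambda>m. diffs (pc (Suc n)) m * w ^ m)"
    by (rule termdiff_converges[of w 1]) (use assms summable_pc in auto)
  have "(\<Sum>m. diffs (pc (Suc n)) m * w ^ m) = (if w = 0 then 1 else Ser n w / w)"
  proof (cases "w = 0")
    case True thus ?thesis by (simp only: True powser_zero) (simp add: diffs_pc)
  next
    case False
    have "(\<lambda>m. pc n m * w ^ m) sums Ser n w" unfolding Ser_def using summable_pc[OF assms] by (simp add: summable_sums)
    hence "(\<lambda>m. pc n (Suc m) * w ^ (Suc m)) sums Ser n w"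
      by (subst sums_Suc_iff) (simp add: pc_def)
    moreover have "(\<lambda>m. w * (diffs (pc (Suc n)) m * w ^ m)) sums (w * (\<Sum>m. diffs (pc (Suc n)) m * w ^ m))"
      by (intro sums_mult summable_sums sm)
    moreover have "(\<lambda>m. w * (diffs (pc (Suc n)) m * w ^ m)) = (\<lambda>m. pc n (Suc m) * w ^ (Suc m))"
      by (simp add: diffs_pc pc_def fun_eq_iff field_simps del: of_nat_Suc)
    ultimately have "Ser n w = w * (\<Sum>m. diffs (pc (Suc n)) m * w ^ m)" using sums_unique2 by metis
    thus ?thesis using False by (simp add: field_simps)
  qed
  thus ?thesis using d by simp
qed

lemma polylog_Ser:
  assumes "norm w < 1"
  shows "polylog (Suc n) w = Ser (Suc n) w"
  using assms
proof (induction n arbitrary: w)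
  case 0
  have "(\<lambda>m. - ((-(-w)) ^ m) / of_nat m) sums ln (1 + - w)"
    by (rule Ln_series') (use 0 in simp)
  hence "(\<lambda>m. - (- ((-(-w)) ^ m) / of_nat m)) sums - ln (1 + - w)"
    by (rule sums_minus)
  moreover have "(\<lambda>m. - (- ((-(-w)) ^ m) / of_nat m)) = (\<lambda>m. pc 1 m * w ^ m)"
    by (auto simp: pc_def fun_eq_iff)
  ultimately have "(\<lambda>m. pc 1 m * w ^ m) sums (- Ln (1 - w))" by simp
  thus ?case by (simp add: Ser_def sums_iff)
next
  case (Suc n)
  define f where "f = (\<lambda>w. polylog (Suc (Suc n)) w - Ser (Suc (Suc n)) w)"
  have "\<exists>c. \<forall>x\<in>ball 0 1. f x = c"
  proof (rule has_field_derivative_zero_constant)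
    fix x :: complex assume x: "x \<in> ball 0 1"
    hence xs: "x \<in> slit" using slit_ball by auto
    have nx: "norm x < 1" using x by simp
    have d: "(f has_field_derivative ((if x = 0 then 1 else polylog (Suc n) x / x) - (if x = 0 then 1 else Ser (Suc n) x / x))) (at x)"
      unfolding f_def by (rule DERIV_diff[OF polylog_deriv[OF xs] Ser_deriv[OF nx]])
    have e: "(if x = 0 then 1 else polylog (Suc n) x / x) - (if x = 0 then 1 else Ser (Suc n) x / x) = 0"
      using Suc.IH[OF nx] by (simp only: if_cancel diff_self split: if_split)
    show "(f has_field_derivative 0) (at x within ball 0 1)"
      by (rule has_field_derivative_at_within) (rule DERIV_cong[OF d e])
  qed simp
  then obtain c where c: "\<And>x. x \<in> ball 0 1 \<Longrightarrow> f x = c" by blast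
  have "f 0 = 0" unfolding f_def by (simp only: polylog_0 Ser_0 diff_self)
  hence "c = 0" using c[of 0] by simp
  hence "f w = 0" using c[of w] Suc.prems by simp
  thus ?case unfolding f_def by (simp only: right_minus_eq)
qed

lemma continuous_Ser:
  assumes "n \<ge> 2"
  shows "continuous_on (cball 0 1) (Ser n)"
proof -
  have "uniform_limit (cball 0 1) (\<lambda>N w. \<Sum>m<N. pc n m * w ^ m) (\<lambda>w. \<Sum>m. pc n m * w ^ m) sequentially"
    by (rule Weierstrass_m_test[OF _ inverse_power_summable[of 2]]) (use norm_pc2 assms in auto)
  hence "continuous_on (cball 0 1) (\<lambda>w. \<Sum>m. pc n m * w ^ m)"
    by (rule uniform_limit_theorem[rotated]) (auto intro!: always_eventually continuous_intros)
  thus ?thesis by (simp add: Ser_def[abs_def])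
qed

lemma polylog_Ser_circle:
  assumes "w \<in> cball 0 1 - {1}"
  shows "polylog (Suc (Suc n)) w = Ser (Suc (Suc n)) w"
proof (cases "norm w < 1")
  case True thus ?thesis by (rule polylog_Ser)
next
  case False
  hence nw: "norm w = 1" using assms by simp
  define g where "g = (\<lambda>r::real. of_real r * w)"
  have g: "(g \<longlongrightarrow> w) (at_left 1)"
    unfolding g_def by (rule tendsto_eq_intros refl)+ simp
  have ws: "w \<in> slit" using assms slit_ball by auto
  have l1: "((\<lambda>r. polylog (Suc (Suc n)) (g r)) \<longlongrightarrow> polylog (Suc (Suc n)) w) (at_left 1)"
    by (rule isCont_tendsto_compose[OF isCont_polylog[OF ws] g])
  have ev: "eventually (\<lambda>r. r \<in> {0<..<1}) (at_left (1::real))"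
    by (rule eventually_at_left_real) simp
  have l2: "((\<lambda>r. Ser (Suc (Suc n)) (g r)) \<longlongrightarrow> Ser (Suc (Suc n)) w) (at_left 1)"
  proof (rule continuous_on_tendsto_compose[OF continuous_Ser g])
    show "w \<in> cball 0 1" using nw by simp
    show "\<forall>\<^sub>F x in at_left 1. g x \<in> cball 0 1"
      using ev by eventually_elim (auto simp: g_def norm_mult nw)
  qed simp
  have "eventually (\<lambda>r. polylog (Suc (Suc n)) (g r) = Ser (Suc (Suc n)) (g r)) (at_left (1::real))"
    using ev by eventually_elim (intro polylog_Ser, auto simp: g_def norm_mult nw)
  hence l1': "((\<lambda>r. Ser (Suc (Suc n)) (g r)) \<longlongrightarrow> polylog (Suc (Suc n)) w) (at_left 1)"
    using l1 by (rule Lim_transform_eventually[rotated]) 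
  show ?thesis using tendsto_unique[OF _ l1' l2] by simp
qed

lemma sets_lebesgue_Ioo: "{a<..<b::real} \<in> sets lebesgue"
  by simp

lemma polylog_real_integral:
  assumes "y \<ge> 0"
  shows "polylog (Suc (Suc n)) (of_real y) = integral {0..y} (\<lambda>t. polylog (Suc n) (of_real t) / of_real t)"
proof (cases "y = 0")
  case True thus ?thesis by simp
next
  case False
  hence "0 < y" using assms by simp
  have "polylog (Suc (Suc n)) (of_real y) = contour_integral (linepath 0 (of_real y)) (\<lambda>t. polylog (Suc n) t / t)"
    by (simp add: polylog.simps(3))
  also have "\<dots> = integral {Re 0..Re (of_real y)} (\<lambda>x. polylog (Suc n) (of_real x) / of_real x)"
    by (rule contour_integral_linepath_Reals_eq) (use \<open>0 < y\<close> in auto)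
  finally show ?thesis by simp
qed

definition g1 :: "real \<Rightarrow> complex" where
  "g1 t = polylog (Suc 0) (of_real t) / of_real t"

lemma g1_lt1: assumes "0 < t" "t < 1" shows "g1 t = of_real (- ln (1 - t) / t)"
proof -
  have "1 - complex_of_real t = of_real (1 - t)" by simp
  hence "Ln (1 - complex_of_real t) = of_real (ln (1 - t))"
    using Ln_of_real[of "1 - t"] assms by simp
  thus ?thesis by (simp add: g1_def)
qed

lemma g1_gt1: assumes "1 < t" shows "g1 t = - (of_real (ln (t - 1)) + of_real pi * \<i>) / of_real t"
proof -
  have "1 - complex_of_real t = of_real (1 - t)" by simp
  hence "Ln (1 - complex_of_real t) = of_real (ln (t - 1)) + of_real pi * \<i>"
    using Ln_of_real'[of "1 - t"] assms by simp
  thus ?thesis by (simp add: g1_def)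
qed

lemma bound01:
  assumes "0 < t" "t < (1::real)"
  shows "- ln (1 - t) / t \<le> 2 - 2 * ln (1 - t)"
proof -
  have a0: "- ln (1 - t) \<ge> 0" using assms by simp
  show ?thesis
  proof (cases "t \<ge> 1/2")
    case True
    hence "- ln (1 - t) / t \<le> - ln (1 - t) / (1/2)"
      using a0 assms by (intro divide_left_mono) auto
    thus ?thesis using a0 by simp
  next
    case False
    have "ln (1 / (1 - t)) \<le> 1 / (1 - t) - 1"
      by (rule ln_le_minus_one) (use assms in simp)
    moreover have "ln (1 / (1 - t)) = - ln (1 - t)" using assms by (simp add: ln_div)
    moreover have "1 / (1 - t) - 1 = t / (1 - t)" using assms by (simp add: field_simps)
    moreover have "t / (1 - t) \<le> 2 * t" using False assms by (simp add: field_simps)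
    ultimately have "- ln (1 - t) \<le> 2 * t" by linarith
    hence "- ln (1 - t) / t \<le> 2" using assms by (simp add: field_simps)
    thus ?thesis using a0 by linarith
  qed
qed

lemma b1_integrable: "(\<lambda>t::real. 2 - 2 * ln (1 - t)) integrable_on {0..1}"
proof -
  define B where "B = (\<lambda>t::real. 4 * t + 2 * ((1 - t) * ln (1 - t)))"
  have "((\<lambda>t. 2 - 2 * ln (1 - t)) has_integral (B 1 - B 0)) {0..1}"
  proof (rule fundamental_theorem_of_calculus_interior)
    show "continuous_on {0..1} B"
    proof (rule continuous_on_IccI)
      show "(B \<longlongrightarrow> B 0) (at_right 0)" unfolding B_def by real_asymp
      show "(B \<longlongrightarrow> B 1) (at_left 1)" unfolding B_def by real_asymp
      fix x :: real assume "0 < x" "x < 1"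
      hence "isCont B x" unfolding B_def by (auto intro!: continuous_intros)
      thus "(B \<longlongrightarrow> B x) (at x)" by (simp add: isCont_def)
    qed simp
    fix x :: real assume x: "x \<in> {0<..<1}"
    have "(B has_real_derivative (2 - 2 * ln (1 - x))) (at x)"
      unfolding B_def using x by (auto intro!: derivative_eq_intros simp: divide_simps)
    thus "(B has_vector_derivative (2 - 2 * ln (1 - x))) (at x)"
      by (simp add: has_real_derivative_iff_has_vector_derivative)
  qed simp
  thus ?thesis by blast
qed

lemma g1_integrable01: "g1 integrable_on {0..1}"
proof -
  have "g1 integrable_on {0<..<1}"
  proof (rule measurable_bounded_by_integrable_imp_integrable)
    have "continuous_on {0<..<1} (\<lambda>t. complex_of_real (- ln (1 - t) / t))"
      by (auto intro!: continuous_intros)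
    hence "continuous_on {0<..<1} g1"
      by (rule continuous_on_cong[THEN iffD1, rotated 2]) (auto simp: g1_lt1)
    thus "g1 \<in> borel_measurable (lebesgue_on {0<..<1})"
      by (rule continuous_imp_measurable_on_sets_lebesgue) simp
    show "(\<lambda>t::real. 2 - 2 * ln (1 - t)) integrable_on {0<..<1}"
      using b1_integrable by (simp add: integrable_on_Icc_iff_Ioo)
    fix t :: real assume "t \<in> {0<..<1}"
    hence t: "0 < t" "t < 1" by auto
    have "norm (g1 t) = \<bar>- ln (1 - t) / t\<bar>" using t by (simp only: g1_lt1 norm_of_real)
    also have "\<dots> = - ln (1 - t) / t" using t by (intro abs_of_nonneg divide_nonneg_pos) auto
    also have "\<dots> \<le> 2 - 2 * ln (1 - t)" by (rule bound01[OF t])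
    finally show "norm (g1 t) \<le> 2 - 2 * ln (1 - t)" .
  qed simp
  thus ?thesis by (simp add: integrable_on_Icc_iff_Ioo)
qed

lemma div_le_self_real: "1 < (t::real) \<Longrightarrow> (N::real) \<ge> 0 \<Longrightarrow> N / t \<le> N"
  by (simp add: divide_le_eq mult_le_cancel_left1)

lemma abs_ln_bound:
  assumes "0 < x" "x < Y" "1 < (Y::real)"
  shows "\<bar>ln x\<bar> \<le> 2 * ln Y - ln x"
proof (cases "x \<le> 1")
  case True
  hence "ln x \<le> 0" using assms by simp
  moreover have "ln Y > 0" using assms by simp
  ultimately show ?thesis by simp
next
  case False
  hence "ln x \<ge> 0" by simp
  moreover have "ln x \<le> ln Y" using assms by simp
  ultimately show ?thesis by simp
qed

lemma b2_integrable:
  assumes "1 < (Y::real)"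
  shows "(\<lambda>t::real. pi + 2 * ln Y - ln (t - 1)) integrable_on {1..Y}"
proof -
  define B where "B = (\<lambda>t::real. (pi + 2 * ln Y + 1) * t - (t - 1) * ln (t - 1))"
  have "((\<lambda>t. pi + 2 * ln Y - ln (t - 1)) has_integral (B Y - B 1)) {1..Y}"
  proof (rule fundamental_theorem_of_calculus_interior)
    show "continuous_on {1..Y} B"
    proof (rule continuous_on_IccI)
      show "(B \<longlongrightarrow> B 1) (at_right 1)" unfolding B_def by real_asymp
      have "isCont B Y" unfolding B_def using assms by (auto intro!: continuous_intros)
      thus "(B \<longlongrightarrow> B Y) (at_left Y)" by (simp add: isCont_def filterlim_at_split)
      fix x :: real assume "1 < x" "x < Y"
      hence "isCont B x" unfolding B_def by (auto intro!: continuous_intros)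
      thus "(B \<longlongrightarrow> B x) (at x)" by (simp add: isCont_def)
    qed (use assms in simp)
    fix x :: real assume x: "x \<in> {1<..<Y}"
    have "(B has_real_derivative (pi + 2 * ln Y - ln (x - 1))) (at x)"
      unfolding B_def using x by (auto intro!: derivative_eq_intros simp: divide_simps)
    thus "(B has_vector_derivative (pi + 2 * ln Y - ln (x - 1))) (at x)"
      by (simp add: has_real_derivative_iff_has_vector_derivative)
  qed (use assms in simp)
  thus ?thesis by blast
qed

lemma g1_integrable1Y:
  assumes "1 < (Y::real)"
  shows "g1 integrable_on {1..Y}"
proof -
  have "g1 integrable_on {1<..<Y}"
  proof (rule measurable_bounded_by_integrable_imp_integrable)
    have "continuous_on {1<..<Y} (\<lambda>t. - (of_real (ln (t - 1)) + of_real pi * \<i>) / complex_of_real t)"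
      by (auto intro!: continuous_intros)
    hence "continuous_on {1<..<Y} g1"
      by (rule continuous_on_cong[THEN iffD1, rotated 2]) (auto simp: g1_gt1)
    thus "g1 \<in> borel_measurable (lebesgue_on {1<..<Y})"
      by (rule continuous_imp_measurable_on_sets_lebesgue) simp
    show "(\<lambda>t::real. pi + 2 * ln Y - ln (t - 1)) integrable_on {1<..<Y}"
      using b2_integrable[OF assms] by (simp add: integrable_on_Icc_iff_Ioo)
    fix t :: real assume "t \<in> {1<..<Y}"
    hence t: "1 < t" "t < Y" by auto
    have "norm (g1 t) = norm (- (of_real (ln (t - 1)) + of_real pi * \<i>)) / norm (complex_of_real t)"
      using t by (simp only: g1_gt1 norm_divide)
    also have "\<dots> = norm (of_real (ln (t - 1)) + of_real pi * \<i>) / t"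
      using t by (simp only: norm_minus_cancel norm_of_real)
    also have "\<dots> \<le> norm (of_real (ln (t - 1)) + of_real pi * \<i>)"
      using t by (intro div_le_self_real) auto
    also have "\<dots> \<le> norm (of_real (ln (t - 1)) :: complex) + norm (of_real pi * \<i> :: complex)"
      by (rule norm_triangle_ineq)
    also have "\<dots> = \<bar>ln (t - 1)\<bar> + pi" by (simp add: norm_mult)
    also have "\<bar>ln (t - 1)\<bar> \<le> 2 * ln Y - ln (t - 1)"
      by (rule abs_ln_bound) (use t assms in auto)
    finally show "norm (g1 t) \<le> pi + 2 * ln Y - ln (t - 1)" by simp
  qed simp
  thus ?thesis by (simp add: integrable_on_Icc_iff_Ioo)
qed

lemma g1_integrable:
  assumes "0 \<le> (Y::real)"
  shows "g1 integrable_on {0..Y}"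
proof (cases "Y \<le> 1")
  case True
  thus ?thesis using integrable_on_subinterval[OF g1_integrable01, of 0 Y] assms by auto
next
  case False
  thus ?thesis using Henstock_Kurzweil_Integration.integrable_combine[OF _ _ g1_integrable01 g1_integrable1Y, of Y] by simp
qed

lemma two_Suc: "(2::nat) = Suc (Suc 0)" and three_Suc: "(3::nat) = Suc (Suc (Suc 0))"
  by simp_all

lemma polylog2_real: "y \<ge> 0 \<Longrightarrow> polylog 2 (of_real y) = integral {0..y} g1"
  unfolding two_Suc g1_def[abs_def] by (rule polylog_real_integral)

lemma cont_polylog2_real:
  assumes "0 \<le> (Y::real)"
  shows "continuous_on {0..Y} (\<lambda>y. polylog 2 (of_real y))"
proof -
  have "continuous_on {0..Y} (\<lambda>y. integral {0..y} g1)"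
    by (rule indefinite_integral_continuous_1[OF g1_integrable[OF assms]])
  thus ?thesis by (rule continuous_on_cong[THEN iffD1, rotated 2]) (auto simp: polylog2_real)
qed

lemma polylog_Ser2: "norm w < 1 \<Longrightarrow> polylog 2 w = Ser 2 w"
  unfolding two_Suc by (rule polylog_Ser)

lemma polylog_Ser3: "norm w < 1 \<Longrightarrow> polylog 3 w = Ser 3 w"
  unfolding three_Suc by (rule polylog_Ser)

lemma cont_q:
  assumes "0 \<le> (Y::real)"
  shows "continuous_on {0..Y} (\<lambda>t. if t = 0 then 1 else polylog 2 (of_real t) / of_real t)"
proof -
  define Z where "Z = max Y 1"
  have Z: "1 \<le> Z" "Y \<le> Z" by (auto simp: Z_def)
  let ?q = "\<lambda>t::real. if t = 0 then 1 else polylog 2 (of_real t) / of_real t"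
  have A: "continuous_on {0..1/2} ?q"
  proof -
    have "continuous_on slit (\<lambda>w. if w = 0 then 1 else polylog (Suc (Suc 0)) w / w)"
      by (rule holomorphic_on_imp_continuous_on[OF polylog_div_holo])
    hence "continuous_on {0..1/2} (\<lambda>t::real. (\<lambda>w. if w = 0 then 1 else polylog (Suc (Suc 0)) w / w) (of_real t))"
    proof (rule continuous_on_compose2)
      show "continuous_on {0..1/2} (of_real :: real \<Rightarrow> complex)" by (intro continuous_intros)
      show "(of_real :: real \<Rightarrow> complex) ` {0..1/2} \<subseteq> slit" by (auto simp: slit_def)
    qed
    thus ?thesis unfolding two_Suc of_real_eq_0_iff .
  qed
  have B: "continuous_on {1/2..Z} ?q"
  proof -
    have "continuous_on {1/2..Z} (\<lambda>t. polylog 2 (of_real t))"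
      by (rule continuous_on_subset[OF cont_polylog2_real[of Z]]) (use Z in auto)
    hence "continuous_on {1/2..Z} (\<lambda>t. polylog 2 (of_real t) / of_real t)"
      by (intro continuous_intros) auto
    thus ?thesis by (rule continuous_on_cong[THEN iffD1, rotated 2]) auto
  qed
  have "continuous_on ({0..1/2} \<union> {1/2..Z}) ?q"
    by (rule continuous_on_closed_Un[OF _ _ A B]) auto
  moreover have "{0..Y} \<subseteq> {0..1/2} \<union> {1/2..Z}" using Z by auto
  ultimately show ?thesis by (rule continuous_on_subset)
qed

lemma g2_integrable:
  assumes "0 \<le> (Y::real)"
  shows "(\<lambda>t. polylog 2 (of_real t) / of_real t) integrable_on {0..Y}"
proof (rule integrable_spike_finite[of "{0}"])
  show "(\<lambda>t::real. if t = 0 then 1 else polylog 2 (of_real t) / of_real t) integrable_on {0..Y}"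
    by (rule integrable_continuous_interval[OF cont_q[OF assms]])
qed auto

lemma polylog3_real: "y \<ge> 0 \<Longrightarrow> polylog 3 (of_real y) = integral {0..y} (\<lambda>t. polylog 2 (of_real t) / of_real t)"
  unfolding three_Suc two_Suc by (rule polylog_real_integral)

lemma cont_polylog3_real:
  assumes "0 \<le> (Y::real)"
  shows "continuous_on {0..Y} (\<lambda>y. polylog 3 (of_real y))"
proof -
  have "continuous_on {0..Y} (\<lambda>y. integral {0..y} (\<lambda>t. polylog 2 (of_real t) / of_real t))"
    by (rule indefinite_integral_continuous_1[OF g2_integrable[OF assms]])
  thus ?thesis by (rule continuous_on_cong[THEN iffD1, rotated 2]) (auto simp: polylog3_real)
qed

lemma polylog1_vd:
  assumes "1 < y"
  shows "((\<lambda>t. polylog (Suc 0) (of_real t)) has_vector_derivative (1 / (1 - of_real y))) (at y)"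
proof -
  define h where "h = (\<lambda>w. - (Ln (w - 1) + of_real pi * \<i>))"
  have "Re (of_real y - 1) > 0" using assms by simp
  hence nn: "(of_real y - 1 :: complex) \<notin> \<real>\<^sub>\<le>\<^sub>0" by (auto simp: complex_nonpos_Reals_iff)
  have "(h has_field_derivative (- (inverse (of_real y - 1) * (1 - 0) + 0))) (at (of_real y))"
    unfolding h_def by (intro derivative_eq_intros has_field_derivative_Ln refl) (use nn in auto)
  moreover have "- (inverse (of_real y - 1) * (1 - 0) + 0) = 1 / (1 - complex_of_real y)"
    using assms by (simp add: field_simps)
  ultimately have "((\<lambda>t. h (of_real t)) has_vector_derivative (1 / (1 - of_real y))) (at y)"
    by (intro has_vector_derivative_real_field) simp
  thus ?thesis
  proof (rule has_vector_derivative_transform_within_open[of _ _ _ "{1<..}"])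
    fix t :: real assume "t \<in> {1<..}"
    hence t: "1 < t" by simp
    have "1 - complex_of_real t = of_real (1 - t)" by simp
    hence "Ln (1 - complex_of_real t) = of_real (ln (t - 1)) + of_real pi * \<i>"
      using Ln_of_real'[of "1 - t"] t by simp
    moreover have "Ln (complex_of_real t - 1) = of_real (ln (t - 1))"
      using Ln_of_real[of "t - 1"] t by simp
    ultimately show "h (of_real t) = polylog (Suc 0) (of_real t)" by (simp add: h_def)
  qed (use assms in auto)
qed

lemma isCont_g1: assumes "1 < y" shows "isCont g1 y"
proof -
  have "isCont (\<lambda>t. polylog (Suc 0) (of_real t)) y"
    using has_vector_derivative_continuous[OF polylog1_vd[OF assms]] by simp
  hence "isCont (\<lambda>t. polylog (Suc 0) (of_real t) / of_real t) y"
    using assms by (intro continuous_intros) auto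
  thus ?thesis by (simp add: g1_def[abs_def])
qed

lemma polylog2_vd:
  assumes "1 < y"
  shows "((\<lambda>t. polylog 2 (of_real t)) has_vector_derivative g1 y) (at y)"
proof -
  have "((\<lambda>u. integral {0..u} g1) has_vector_derivative g1 y) (at y within {0..y+1} - {})"
  proof (rule integral_has_vector_derivative_continuous_at[OF g1_integrable])
    show "continuous (at y within {0..y + 1} - {}) g1"
      using isCont_g1[OF assms] continuous_at_imp_continuous_at_within by blast
  qed (use assms in auto)
  moreover have "at y within {0..y+1} - {} = at y" using assms by (simp add: at_within_Icc_at)
  ultimately have "((\<lambda>u. integral {0..u} g1) has_vector_derivative g1 y) (at y)" by simp
  thus ?thesis
    by (rule has_vector_derivative_transform_within_open[of _ _ _ "{0<..}"])
       (use assms in \<open>auto simp: polylog2_real\<close>)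
qed

lemma polylog3_vd:
  assumes "1 < y"
  shows "((\<lambda>t. polylog 3 (of_real t)) has_vector_derivative (polylog 2 (of_real y) / of_real y)) (at y)"
proof -
  let ?g = "\<lambda>t. polylog 2 (of_real t) / of_real t"
  have c: "isCont ?g y"
  proof -
    have "isCont (\<lambda>t. polylog 2 (of_real t)) y"
      using has_vector_derivative_continuous[OF polylog2_vd[OF assms]] by simp
    thus ?thesis using assms by (intro continuous_intros) auto
  qed
  have "((\<lambda>u. integral {0..u} ?g) has_vector_derivative ?g y) (at y within {0..y+1} - {})"
  proof (rule integral_has_vector_derivative_continuous_at[OF g2_integrable])
    show "continuous (at y within {0..y + 1} - {}) ?g"
      using c continuous_at_imp_continuous_at_within by blast
  qed (use assms in auto)
  moreover have "at y within {0..y+1} - {} = at y" using assms by (simp add: at_within_Icc_at)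
  ultimately have "((\<lambda>u. integral {0..u} ?g) has_vector_derivative ?g y) (at y)" by simp
  thus ?thesis
    by (rule has_vector_derivative_transform_within_open[of _ _ _ "{0<..}"])
       (use assms in \<open>auto simp: polylog3_real\<close>)
qed

lemma Ser_at_left_1:
  assumes "n \<ge> 2"
  shows "((\<lambda>y::real. Ser n (of_real y)) \<longlongrightarrow> Ser n 1) (at_left 1)"
proof (rule continuous_on_tendsto_compose[OF continuous_Ser[OF assms]])
  show "((\<lambda>y::real. complex_of_real y) \<longlongrightarrow> 1) (at_left 1)"
    by (rule tendsto_eq_intros refl)+ simp
  have "eventually (\<lambda>y. y \<in> {0<..<1}) (at_left (1::real))" by (rule eventually_at_left_real) simp
  thus "\<forall>\<^sub>F y in at_left 1. complex_of_real y \<in> cball 0 1"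
    by eventually_elim auto
qed simp

lemma polylog2_1: "polylog 2 1 = Ser 2 1"
proof -
  have l1: "((\<lambda>y::real. polylog 2 (of_real y)) \<longlongrightarrow> polylog 2 (of_real 1)) (at_left 1)"
    by (rule continuous_on_Icc_at_leftD[OF cont_polylog2_real]) simp_all
  have "eventually (\<lambda>y. y \<in> {0<..<1}) (at_left (1::real))" by (rule eventually_at_left_real) simp
  hence ev2: "eventually (\<lambda>y. Ser 2 (of_real y) = polylog 2 (of_real y)) (at_left (1::real))"
    by eventually_elim (auto simp: polylog_Ser2)
  have l0: "((\<lambda>y::real. Ser 2 (of_real y)) \<longlongrightarrow> Ser 2 1) (at_left 1)"
    by (rule Ser_at_left_1) simp
  have l2: "((\<lambda>y::real. polylog 2 (of_real y)) \<longlongrightarrow> Ser 2 1) (at_left 1)"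
    by (rule Lim_transform_eventually[OF l0 ev2])
  show ?thesis using tendsto_unique[OF _ l1 l2] by simp
qed

lemma polylog3_1: "polylog 3 1 = Ser 3 1"
proof -
  have l1: "((\<lambda>y::real. polylog 3 (of_real y)) \<longlongrightarrow> polylog 3 (of_real 1)) (at_left 1)"
    by (rule continuous_on_Icc_at_leftD[OF cont_polylog3_real]) simp_all
  have "eventually (\<lambda>y. y \<in> {0<..<1}) (at_left (1::real))" by (rule eventually_at_left_real) simp
  hence ev2: "eventually (\<lambda>y. Ser 3 (of_real y) = polylog 3 (of_real y)) (at_left (1::real))"
    by eventually_elim (auto simp: polylog_Ser3)
  have l0: "((\<lambda>y::real. Ser 3 (of_real y)) \<longlongrightarrow> Ser 3 1) (at_left 1)"
    by (rule Ser_at_left_1) simp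
  have l2: "((\<lambda>y::real. polylog 3 (of_real y)) \<longlongrightarrow> Ser 3 1) (at_left 1)"
    by (rule Lim_transform_eventually[OF l0 ev2])
  show ?thesis using tendsto_unique[OF _ l1 l2] by simp
qed

lemma polylog2_cball: "w \<in> cball 0 1 \<Longrightarrow> polylog 2 w = Ser 2 w"
  using polylog2_1 polylog_Ser_circle[of w 0] by (cases "w = 1") (auto simp: two_Suc)

lemma polylog3_cball: "w \<in> cball 0 1 \<Longrightarrow> polylog 3 w = Ser 3 w"
  using polylog3_1 polylog_Ser_circle[of w 1] by (cases "w = 1") (auto simp: three_Suc)

lemma cont_polylog2_cball: "continuous_on (cball 0 1) (polylog 2)"
  using continuous_Ser[of 2] by (rule continuous_on_cong[THEN iffD1, rotated 2]) (auto simp: polylog2_cball)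

lemma cont_polylog3_cball: "continuous_on (cball 0 1) (polylog 3)"
  using continuous_Ser[of 3] by (rule continuous_on_cong[THEN iffD1, rotated 2]) (auto simp: polylog3_cball)

lemma zeta_nat_sums: "m \<ge> 2 \<Longrightarrow> (\<lambda>k. 1 / of_nat (Suc k) ^ m) sums zeta (of_nat m)"
proof -
  assume m: "m \<ge> 2"
  have "(\<lambda>k. pc m k * 1 ^ k) sums Ser m 1"
    unfolding Ser_def by (rule summable_sums[OF summable_pc2]) (use m in auto)
  hence "pc m sums Ser m 1" by simp
  hence "(\<lambda>k. pc m (Suc k)) sums Ser m 1"
    using sums_Suc_iff[of "pc m" "Ser m 1"] by (simp add: pc_def[of m 0])
  hence s: "(\<lambda>k. 1 / of_nat (Suc k) ^ m) sums Ser m 1"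
    by (simp add: pc_def del: of_nat_Suc)
  have "zeta (of_nat m) = (\<Sum>k. 1 / of_nat (Suc k) ^ m)"
    unfolding zeta_def by (simp add: powr_nat' del: of_nat_Suc)
  also have "\<dots> = Ser m 1" using s by (simp add: sums_iff)
  finally show ?thesis using s by simp
qed

lemma zeta_nat: "m \<ge> 2 \<Longrightarrow> zeta (of_nat m) = Ser m 1"
proof -
  assume m: "m \<ge> 2"
  have "(\<lambda>k. pc m k * 1 ^ k) sums Ser m 1"
    unfolding Ser_def by (rule summable_sums[OF summable_pc2]) (use m in auto)
  hence "pc m sums Ser m 1" by simp
  hence "(\<lambda>k. pc m (Suc k)) sums Ser m 1"
    using sums_Suc_iff[of "pc m" "Ser m 1"] by (simp add: pc_def[of m 0])
  hence "(\<lambda>k. 1 / of_nat (Suc k) ^ m) sums Ser m 1"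
    by (simp add: pc_def del: of_nat_Suc)
  with zeta_nat_sums[OF m] show ?thesis using sums_unique2 by blast
qed

lemma Ser2_1: "Ser 2 1 = of_real (pi ^ 2 / 6)"
proof -
  have e: "(of_real (1 / (1 + real n)\<^sup>2) :: complex) = 1 / of_nat (Suc n) ^ 2" for n
    by (simp only: of_real_divide of_real_power of_real_add of_real_1 of_real_of_nat_eq of_nat_Suc)
  have "(\<lambda>n. of_real (1 / (1 + real n)\<^sup>2) :: complex) sums of_real (pi\<^sup>2 / 6)"
    using sums_of_real[OF inverse_squares_sums, where 'a=complex] by (simp add: add.commute)
  hence "(\<lambda>k. 1 / of_nat (Suc k) ^ 2 :: complex) sums of_real (pi\<^sup>2 / 6)"
    by (simp only: e)
  with zeta_nat_sums[of 2] zeta_nat[of 2] show ?thesis using sums_unique2 by force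
qed

lemma polylog2_1': "polylog 2 1 = of_real (pi ^ 2 / 6)"
  using polylog2_1 Ser2_1 by simp

lemma polylog3_1': "polylog 3 1 = zeta 3"
  using polylog3_1 zeta_nat[of 3] by simp

lemma Digamma_reflection:
  fixes v :: complex
  assumes v: "v \<notin> \<int>"
  shows "Digamma (1 - v) - Digamma v = of_real pi * cos (of_real pi * v) / sin (of_real pi * v)"
proof -
  have v1: "v \<notin> \<int>\<^sub>\<le>\<^sub>0" using v nonpos_Ints_subset_Ints by blast
  have v2: "1 - v \<notin> \<int>\<^sub>\<le>\<^sub>0"
  proof
    assume "1 - v \<in> \<int>\<^sub>\<le>\<^sub>0"
    hence "1 - v \<in> \<int>" using nonpos_Ints_subset_Ints by blast
    hence "1 - (1 - v) \<in> \<int>" by (intro Ints_diff) auto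
    thus False using v by simp
  qed
  let ?f = "\<lambda>v. rGamma v * rGamma (1 - v)"
  let ?g = "\<lambda>v. sin (of_real pi * v) / of_real pi :: complex"
  have fg: "?f = ?g" by (rule ext) (rule rGamma_reflection_complex)
  have dA: "(rGamma has_field_derivative - rGamma v * Digamma v) (at v)"
    by (rule has_field_derivative_rGamma_no_nonpos_int[OF v1])
  have dB0: "(rGamma has_field_derivative - rGamma (1 - v) * Digamma (1 - v)) (at (1 - v))"
    by (rule has_field_derivative_rGamma_no_nonpos_int[OF v2])
  have dL: "((\<lambda>x::complex. 1 - x) has_field_derivative (0 - 1)) (at v)"
    by (intro derivative_eq_intros) auto
  have dB: "((\<lambda>x. rGamma (1 - x)) has_field_derivative (- rGamma (1 - v) * Digamma (1 - v)) * (0 - 1)) (at v)"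
    using DERIV_chain2[of rGamma "- rGamma (1 - v) * Digamma (1 - v)" "\<lambda>x. 1 - x" v, OF dB0 dL] .
  have d1: "(?f has_field_derivative
      ((- rGamma v * Digamma v) * rGamma (1 - v) + rGamma v * ((- rGamma (1 - v) * Digamma (1 - v)) * (0 - 1)))) (at v)"
    by (rule DERIV_cong[OF DERIV_mult[OF dA dB]]) (simp add: algebra_simps)
  have d2: "(?g has_field_derivative cos (of_real pi * v)) (at v)"
    by (auto intro!: derivative_eq_intros simp: field_simps)
  have "(- rGamma v * Digamma v) * rGamma (1 - v) + rGamma v * ((- rGamma (1 - v) * Digamma (1 - v)) * (0 - 1))
        = cos (of_real pi * v)"
    using DERIV_unique[OF d1] d2 fg by simp
  hence e: "rGamma v * rGamma (1 - v) * (Digamma (1 - v) - Digamma v) = cos (of_real pi * v)"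
    by (simp add: algebra_simps)
  have nz: "rGamma v * rGamma (1 - v) \<noteq> 0"
    using v1 v2 by (simp add: rGamma_eq_zero_iff)
  have s: "rGamma v * rGamma (1 - v) = sin (of_real pi * v) / of_real pi"
    by (rule rGamma_reflection_complex)
  have s': "sin (of_real pi * v) = of_real pi * (rGamma v * rGamma (1 - v))"
    using s by (simp add: field_simps)
  have "Digamma (1 - v) - Digamma v = cos (of_real pi * v) / (rGamma v * rGamma (1 - v))"
    using e nz by (simp add: field_simps)
  also have "\<dots> = of_real pi * cos (of_real pi * v) / sin (of_real pi * v)"
    unfolding s' using nz by (simp add: field_simps)
  finally show ?thesis .
qed

lemma Digamma_taylor:
  fixes v :: complex
  assumes "norm v < 1"
  shows "(\<lambda>n. Polygamma n 1 / fact n * v ^ n) sums Digamma (1 + v)"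
proof -
  have hol: "Digamma holomorphic_on ball 1 1"
  proof (rule holomorphic_on_Polygamma)
    show "ball 1 1 \<inter> \<int>\<^sub>\<le>\<^sub>0 = ({} :: complex set)"
    proof (safe)
      fix x :: complex assume x: "x \<in> ball 1 1" "x \<in> \<int>\<^sub>\<le>\<^sub>0"
      from x(2) have "Re x \<le> 0" by (auto elim!: nonpos_Ints_cases)
      moreover have "norm (1 - x) < 1" using x(1) by (simp add: dist_norm)
      hence "Re (1 - x) < 1" using complex_Re_le_cmod[of "1 - x"] by linarith
      ultimately show "x \<in> {}" by simp
    qed
  qed
  have "(\<lambda>n. (deriv ^^ n) Digamma 1 / fact n * (1 + v - 1) ^ n) sums Digamma (1 + v)"
    by (rule holomorphic_power_series[OF hol]) (use assms in \<open>simp add: dist_norm\<close>)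
  moreover have "(deriv ^^ n) Digamma 1 = Polygamma n (1::complex)" for n
    using higher_deriv_Polygamma[of "1::complex" n 0] by simp
  ultimately show ?thesis by simp
qed

lemma Polygamma_1_zeta:
  assumes "n > 0"
  shows "Polygamma n (1::complex) / fact n = (-1) ^ Suc n * zeta (of_nat (Suc n))"
proof -
  have "zeta (of_nat (Suc n)) = (\<Sum>k. 1 / of_nat (Suc k) ^ Suc n)"
    using zeta_nat_sums[of "Suc n"] assms by (simp add: sums_iff)
  also have "\<dots> = (\<Sum>k. inverse ((1 + of_nat k) ^ Suc n))"
    by (simp add: inverse_eq_divide add.commute)
  finally show ?thesis using assms by (simp add: Polygamma_def)
qed

definition Bz :: real where "Bz = (\<Sum>k. inverse (real k ^ 2))"

lemma Bz_nonneg: "0 \<le> Bz"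
  unfolding Bz_def by (intro suminf_nonneg inverse_power_summable) auto

lemma norm_zeta_le:
  assumes "m \<ge> 2" shows "norm (zeta (of_nat m)) \<le> Bz"
proof -
  have sm: "summable (\<lambda>k. norm (pc m k * 1 ^ k))"
    by (rule summable_comparison_test'[OF inverse_power_summable[of 2]]) (use norm_pc2[OF _ assms, of 1] in auto)
  have "norm (zeta (of_nat m)) = norm (\<Sum>k. pc m k * 1 ^ k)"
    using zeta_nat[OF assms] by (simp add: Ser_def)
  also have "\<dots> \<le> (\<Sum>k. norm (pc m k * 1 ^ k))" by (rule summable_norm[OF sm])
  also have "\<dots> \<le> (\<Sum>k. inverse (real k ^ 2))"
    by (rule suminf_le[OF _ sm inverse_power_summable]) (use norm_pc2[OF _ assms, of 1] in auto)
  finally show ?thesis by (simp add: Bz_def)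
qed

definition gc :: "nat \<Rightarrow> complex" where
  "gc n = (if even n \<and> 4 \<le> n then 2 * (-1) ^ ((n - 4) div 2) * zeta (of_nat (n - 2)) / (of_nat (n - 1) * of_nat n) else 0)"

lemma inv_bound: "2 \<le> n \<Longrightarrow> inverse (real (n - 1) * real n) \<le> 2 * inverse (real n ^ 2)"
  by (simp add: of_nat_diff field_simps power2_eq_square)

lemma norm_gc: "norm (gc n) \<le> 4 * Bz * inverse (real n ^ 2)"
proof (cases "even n \<and> 4 \<le> n")
  case True
  have g: "gc n = 2 * (-1) ^ ((n - 4) div 2) * zeta (of_nat (n - 2)) / (of_nat (n - 1) * of_nat n)"
    by (simp only: gc_def if_P[OF True])
  have "norm (gc n) = 2 * norm (zeta (of_nat (n - 2))) * inverse (real (n - 1) * real n)"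
    unfolding g by (simp add: norm_divide norm_mult norm_power divide_inverse norm_inverse del: of_nat_diff)
  also have "\<dots> \<le> 2 * Bz * (2 * inverse (real n ^ 2))"
    using True Bz_nonneg by (intro mult_mono inv_bound norm_zeta_le) auto
  finally show ?thesis by simp
next
  case False
  hence "gc n = 0" by (simp only: gc_def if_not_P[OF False] if_False)
  thus ?thesis using Bz_nonneg by simp
qed

lemma summable_gc: assumes "norm z \<le> 1" shows "summable (\<lambda>n. gc n * z ^ n)"
proof (rule summable_comparison_test')
  show "summable (\<lambda>n. 4 * Bz * inverse (real n ^ 2))"
    by (intro summable_mult inverse_power_summable) auto
  fix n :: nat
  have "norm (gc n * z ^ n) = norm (gc n) * norm z ^ n" by (simp add: norm_mult norm_power)
  also have "\<dots> \<le> norm (gc n) * 1" using assms by (intro mult_left_mono power_le_one) auto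
  also have "\<dots> \<le> 4 * Bz * inverse (real n ^ 2)" using norm_gc by simp
  finally show "norm (gc n * z ^ n) \<le> 4 * Bz * inverse (real n ^ 2)" .
qed

definition G :: "complex \<Rightarrow> complex" where "G z = (\<Sum>n. gc n * z ^ n)"
definition G1 :: "complex \<Rightarrow> complex" where "G1 z = (\<Sum>n. diffs gc n * z ^ n)"
definition G2 :: "complex \<Rightarrow> complex" where "G2 z = (\<Sum>n. diffs (diffs gc) n * z ^ n)"

lemma summable_dgc: "norm z < 1 \<Longrightarrow> summable (\<lambda>n. diffs gc n * z ^ n)"
  by (rule termdiff_converges[of _ 1]) (auto intro: summable_gc)

lemma summable_ddgc: "norm z < 1 \<Longrightarrow> summable (\<lambda>n. diffs (diffs gc) n * z ^ n)"
  by (rule termdiff_converges[of _ 1]) (auto intro: summable_dgc)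

lemma G_deriv: "norm z < 1 \<Longrightarrow> (G has_field_derivative G1 z) (at z)"
  unfolding G_def[abs_def] G1_def by (rule termdiffs_strong'[of 1]) (auto intro: summable_gc)

lemma G1_deriv: "norm z < 1 \<Longrightarrow> (G1 has_field_derivative G2 z) (at z)"
  unfolding G1_def[abs_def] G2_def by (rule termdiffs_strong'[of 1]) (auto intro: summable_dgc)

lemma G_cont: "continuous_on (cball 0 1) G"
proof -
  have "uniform_limit (cball 0 1) (\<lambda>N w. \<Sum>m<N. gc m * w ^ m) (\<lambda>w. \<Sum>m. gc m * w ^ m) sequentially"
  proof (rule Weierstrass_m_test)
    show "summable (\<lambda>n. 4 * Bz * inverse (real n ^ 2))"
      by (intro summable_mult inverse_power_summable) auto
    fix n :: nat and w :: complex assume "w \<in> cball 0 1"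
    hence "norm w \<le> 1" by simp
    have "norm (gc n * w ^ n) = norm (gc n) * norm w ^ n" by (simp add: norm_mult norm_power)
    also have "\<dots> \<le> norm (gc n) * 1" using \<open>norm w \<le> 1\<close> by (intro mult_left_mono power_le_one) auto
    also have "\<dots> \<le> 4 * Bz * inverse (real n ^ 2)" using norm_gc by simp
    finally show "norm (gc n * w ^ n) \<le> 4 * Bz * inverse (real n ^ 2)" .
  qed
  hence "continuous_on (cball 0 1) (\<lambda>w. \<Sum>m. gc m * w ^ m)"
    by (rule uniform_limit_theorem[rotated]) (auto intro!: always_eventually continuous_intros)
  thus ?thesis by (simp add: G_def[abs_def])
qed

lemma G_0 [simp]: "G 0 = 0" by (simp add: G_def gc_def)
lemma G1_0 [simp]: "G1 0 = 0" by (simp add: G1_def diffs_def gc_def)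

lemma gc_even: "gc (2 * j + 4) = 2 * (-1) ^ j * zeta (of_nat (2 * Suc j)) / (of_nat (2 * j + 3) * of_nat (2 * j + 4))"
proof -
  have "(2 * j + 4 - 4) div 2 = j" by simp
  moreover have "2 * j + 4 - 2 = 2 * Suc j" by simp
  moreover have "2 * j + 4 - 1 = 2 * j + 3" by simp
  ultimately show ?thesis unfolding gc_def by (simp del: of_nat_add of_nat_mult)
qed

lemma gc_odd: "odd n \<Longrightarrow> gc n = 0"
  by (simp add: gc_def)

lemma LHS_sums:
  assumes "norm z \<le> 1" "z \<noteq> 0"
  shows "(\<lambda>j::nat. (-1) ^ j * zeta (of_nat (2 * Suc j)) * z ^ (2 * Suc j)
            / (of_nat (2 * Suc j + 1) * of_nat (Suc j + 1))) sums (G z / z ^ 2)"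
proof -
  have "(\<lambda>n. gc n * z ^ n) sums G z" unfolding G_def by (rule summable_sums[OF summable_gc[OF assms(1)]])
  hence "(\<lambda>j. gc (2 * j + 4) * z ^ (2 * j + 4)) sums G z"
  proof (subst sums_mono_reindex[of "\<lambda>j. 2 * j + 4"])
    show "strict_mono (\<lambda>j::nat. 2 * j + 4)" by (auto simp: strict_mono_def)
    fix n assume "n \<notin> range (\<lambda>j::nat. 2 * j + 4)"
    hence "\<not> (even n \<and> 4 \<le> n)"
    proof (intro notI)
      assume "even n \<and> 4 \<le> n"
      then obtain k where k: "n = 2 * k" "4 \<le> n" by (auto elim: evenE)
      hence "n = 2 * (k - 2) + 4" by simp
      thus False using \<open>n \<notin> _\<close> by blast
    qed
    thus "gc n * z ^ n = 0" by (simp only: gc_def if_not_P) simp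
  qed
  hence "(\<lambda>j. gc (2 * j + 4) * z ^ (2 * j + 4) / z ^ 2) sums (G z / z ^ 2)"
    by (rule sums_divide)
  moreover have "gc (2 * j + 4) * z ^ (2 * j + 4) / z ^ 2 =
      (-1) ^ j * zeta (of_nat (2 * Suc j)) * z ^ (2 * Suc j) / (of_nat (2 * Suc j + 1) * of_nat (Suc j + 1))" for j
  proof -
    have e: "2 * j + 4 = 2 * Suc j + 2" by simp
    have "z ^ (2 * j + 4) = z ^ (2 * Suc j) * z ^ 2" by (simp only: e power_add)
    hence zz: "z ^ (2 * j + 4) / z ^ 2 = z ^ (2 * Suc j)"
      using assms(2) by simp
    have "gc (2 * j + 4) * z ^ (2 * j + 4) / z ^ 2 = gc (2 * j + 4) * z ^ (2 * Suc j)"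
      by (simp only: times_divide_eq_right[symmetric] zz)
    also have "\<dots> = (-1) ^ j * zeta (of_nat (2 * Suc j)) * z ^ (2 * Suc j) / (of_nat (2 * Suc j + 1) * of_nat (Suc j + 1))"
    proof -
      have e3: "of_nat (2 * j + 3) = (of_nat (2 * Suc j + 1) :: complex)" by simp
      have e4: "of_nat (2 * j + 4) = 2 * (of_nat (Suc j + 1) :: complex)" by simp
      have gen: "2 * a * b / (A * (2 * B)) * c = a * b * c / (A * B)" for a b c A B :: complex
        by (cases "A = 0"; cases "B = 0") (simp_all add: field_simps)
      show ?thesis unfolding gc_even e3 e4 by (rule gen)
    qed
    finally show ?thesis .
  qed
  ultimately show ?thesis by simp
qed

lemma ddgc: "diffs (diffs gc) m = of_nat (Suc m) * of_nat (Suc (Suc m)) * gc (Suc (Suc m))"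
  by (simp add: diffs_def mult.assoc)

lemma G2_term:
  fixes z :: complex
  defines "v \<equiv> \<i> * z"
  shows "diffs (diffs gc) (Suc n) * z ^ Suc n =
         \<i> * z * (Polygamma n 1 / fact n * (- v) ^ n - Polygamma n 1 / fact n * v ^ n)"
proof (cases "even n")
  case True
  have "odd (Suc (Suc (Suc n)))" using True by simp
  hence "gc (Suc (Suc (Suc n))) = 0" by (rule gc_odd)
  moreover have "(- v) ^ n = v ^ n" using True by simp
  ultimately show ?thesis by (simp add: ddgc)
next
  case False
  then obtain j where j: "n = 2 * j + 1" by (auto elim: oddE)
  have pz: "Polygamma n (1::complex) / fact n = zeta (of_nat (2 * Suc j))"
    using Polygamma_1_zeta[of n] j by simp
  have "Suc (Suc (Suc n)) = 2 * j + 4" using j by simp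
  hence g: "gc (Suc (Suc (Suc n))) = 2 * (-1) ^ j * zeta (of_nat (2 * Suc j)) / (of_nat (2 * j + 3) * of_nat (2 * j + 4))"
    by (simp only: gc_even)
  have nz: "(of_nat (2 * j + 3) :: complex) \<noteq> 0" "(of_nat (2 * j + 4) :: complex) \<noteq> 0"
    by (simp_all only: of_nat_eq_0_iff)
  have "diffs (diffs gc) (Suc n) = of_nat (2 * j + 3) * of_nat (2 * j + 4) * gc (Suc (Suc (Suc n)))"
    unfolding ddgc using j by (simp add: algebra_simps)
  also have "\<dots> = 2 * (-1) ^ j * zeta (of_nat (2 * Suc j))"
  proof -
    have gen: "A \<noteq> 0 \<Longrightarrow> B \<noteq> 0 \<Longrightarrow> A * B * (X / (A * B)) = X" for A B X :: complex by simp
    show ?thesis unfolding g by (rule gen[OF nz])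
  qed
  finally have lhs: "diffs (diffs gc) (Suc n) * z ^ Suc n = 2 * (-1) ^ j * zeta (of_nat (2 * Suc j)) * z ^ (2 * Suc j)"
    using j by simp
  have mv: "(- v) ^ n = - (v ^ n)" using False by simp
  have "\<i> * z * (Polygamma n 1 / fact n * (- v) ^ n - Polygamma n 1 / fact n * v ^ n)
        = - 2 * zeta (of_nat (2 * Suc j)) * (v * v ^ n)"
    unfolding mv pz by (simp add: algebra_simps v_def)
  also have "v * v ^ n = v ^ (2 * Suc j)" using j by simp
  also have "v ^ (2 * Suc j) = (\<i> ^ 2) ^ Suc j * z ^ (2 * Suc j)"
    unfolding v_def by (simp only: power_mult_distrib power_mult)
  also have "(\<i> ^ 2) ^ Suc j = - ((-1) ^ j :: complex)" by simp
  finally have r: "\<i> * z * (Polygamma n 1 / fact n * (- v) ^ n - Polygamma n 1 / fact n * v ^ n)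
     = - 2 * zeta (of_nat (2 * Suc j)) * (- ((-1) ^ j) * z ^ (2 * Suc j))" .
  show ?thesis unfolding lhs r by (simp add: algebra_simps)
qed

lemma G2_Digamma:
  assumes "norm z < 1"
  shows "G2 z = \<i> * z * (Digamma (1 - \<i> * z) - Digamma (1 + \<i> * z))"
proof -
  define v where "v = \<i> * z"
  have nv: "norm v < 1" "norm (- v) < 1" using assms by (simp_all add: v_def norm_mult)
  have s1: "(\<lambda>n. Polygamma n 1 / fact n * (- v) ^ n) sums Digamma (1 + - v)"
    by (rule Digamma_taylor[OF nv(2)])
  have s2: "(\<lambda>n. Polygamma n 1 / fact n * v ^ n) sums Digamma (1 + v)"
    by (rule Digamma_taylor[OF nv(1)])
  have s3: "(\<lambda>n. \<i> * z * (Polygamma n 1 / fact n * (- v) ^ n - Polygamma n 1 / fact n * v ^ n))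
      sums (\<i> * z * (Digamma (1 + - v) - Digamma (1 + v)))"
    by (rule sums_mult[OF sums_diff[OF s1 s2]])
  hence "(\<lambda>n. diffs (diffs gc) (Suc n) * z ^ Suc n) sums (\<i> * z * (Digamma (1 + - v) - Digamma (1 + v)))"
    by (simp only: G2_term v_def)
  hence "(\<lambda>n. diffs (diffs gc) n * z ^ n) sums (\<i> * z * (Digamma (1 + - v) - Digamma (1 + v)) + diffs (diffs gc) 0 * z ^ 0)"
    by (rule iffD1[OF sums_Suc_iff[of "\<lambda>n. diffs (diffs gc) n * z ^ n"]])
  moreover have "diffs (diffs gc) 0 = 0" by (simp add: ddgc gc_def)
  ultimately have "(\<lambda>n. diffs (diffs gc) n * z ^ n) sums (\<i> * z * (Digamma (1 - v) - Digamma (1 + v)))"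
    by simp
  thus ?thesis unfolding G2_def v_def by (simp add: sums_iff)
qed

definition K :: "complex \<Rightarrow> complex" where
  "K z = of_real pi * z * (exp (2 * of_real pi * z) + 1) / (exp (2 * of_real pi * z) - 1) - 1"

lemma exp_2piz_eq_1:
  assumes "exp (2 * of_real pi * z) = 1"
  shows "Re z = 0 \<and> (\<exists>n::int. Im z = of_int n)"
proof -
  from assms[unfolded exp_eq_1] obtain n :: int where "Re (2 * of_real pi * z) = 0" "Im (2 * of_real pi * z) = of_int (2 * n) * pi"
    by blast
  thus ?thesis by (intro conjI exI[of _ n]) (auto simp: field_simps)
qed

lemma cot_exp_identity:
  fixes a c :: complex
  assumes "a \<noteq> 0" "a ^ 2 \<noteq> 1"
  shows "\<i> * c * ((inverse a + a) / 2) / ((inverse a - a) / (2 * \<i>)) = c * (a ^ 2 + 1) / (a ^ 2 - 1)"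
proof -
  have "inverse a - a \<noteq> 0"
  proof
    assume "inverse a - a = 0"
    hence "a * a = 1" using assms(1) by (simp add: field_simps)
    thus False using assms(2) by (simp add: power2_eq_square)
  qed
  moreover have "a ^ 2 - 1 \<noteq> 0" using assms(2) by simp
  ultimately show ?thesis using assms(1) by (simp add: field_simps power2_eq_square)
qed

lemma G2_K:
  assumes "z \<noteq> 0" "norm z < 1"
  shows "G2 z = K z"
proof -
  define v where "v = \<i> * z"
  have vI: "v \<notin> \<int>"
  proof
    assume "v \<in> \<int>"
    then obtain m :: int where m: "v = of_int m" by (auto elim: Ints_cases)
    have "norm v < 1" using assms by (simp add: v_def norm_mult)
    hence "\<bar>m\<bar> < 1" using m by simp
    hence "m = 0" by simp
    thus False using m assms by (simp add: v_def)
  qed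
  have v0: "v \<noteq> 0" using assms by (simp add: v_def)
  have p1: "Digamma (1 + v) = Digamma v + 1 / v"
    using Digamma_plus1[OF v0] by (simp add: add.commute)
  have refl: "Digamma (1 - v) - Digamma v = of_real pi * cos (of_real pi * v) / sin (of_real pi * v)"
    by (rule Digamma_reflection[OF vI])
  define a where "a = exp (of_real pi * z)"
  have a0: "a \<noteq> 0" by (simp add: a_def)
  have w: "exp (2 * of_real pi * z) = a ^ 2"
    unfolding a_def by (simp add: exp_double[symmetric] mult.assoc)
  have w1: "a ^ 2 \<noteq> 1"
  proof
    assume "a ^ 2 = 1"
    hence "exp (2 * of_real pi * z) = 1" using w by simp
    from exp_2piz_eq_1[OF this] obtain n :: int where "Re z = 0" "Im z = of_int n" by blast
    moreover have "\<bar>Im z\<bar> < 1" using assms(2) abs_Im_le_cmod[of z] by linarith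
    ultimately have "n = 0" by simp
    thus False using \<open>Re z = 0\<close> \<open>Im z = of_int n\<close> assms(1) by (simp add: complex_eq_iff)
  qed
  have c: "cos (of_real pi * v) = (inverse a + a) / 2"
    unfolding cos_exp_eq a_def v_def by (simp add: exp_minus algebra_simps)
  have s: "sin (of_real pi * v) = (inverse a - a) / (2 * \<i>)"
    unfolding sin_exp_eq a_def v_def by (simp add: exp_minus algebra_simps)
  have "G2 z = v * (Digamma (1 - v) - Digamma (1 + v))"
    using G2_Digamma[OF assms(2)] by (simp add: v_def)
  also have "\<dots> = v * (of_real pi * cos (of_real pi * v) / sin (of_real pi * v)) - 1"
    using refl p1 v0 by (simp add: algebra_simps)
  also have "v * (of_real pi * cos (of_real pi * v) / sin (of_real pi * v)) =
      \<i> * (of_real pi * z) * ((inverse a + a) / 2) / ((inverse a - a) / (2 * \<i>))"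
    unfolding c s by (simp add: v_def algebra_simps)
  also have "\<dots> = of_real pi * z * (a ^ 2 + 1) / (a ^ 2 - 1)"
    by (rule cot_exp_identity[OF a0 w1])
  finally show ?thesis unfolding K_def w by simp
qed

definition E :: "complex \<Rightarrow> complex" where "E z = exp (2 * of_real pi * z)"

definition H :: "complex \<Rightarrow> complex" where
  "H z = - (z ^ 2) / 2 - of_real pi * z ^ 3 / 6 - of_real pi * z / 12 - zeta 3 / (2 * of_real pi ^ 2)
         + polylog 3 (E z) / (2 * of_real pi ^ 2) - z * polylog 2 (E z) / (2 * of_real pi)"

definition H1 :: "complex \<Rightarrow> complex" where
  "H1 z = - z - of_real pi * z ^ 2 / 2 - of_real pi / 12 + polylog 2 (E z) / (2 * of_real pi)
         - z * polylog 1 (E z)"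

lemma E_deriv: "(E has_field_derivative (2 * of_real pi * E z)) (at z)"
  unfolding E_def[abs_def] by (auto intro!: derivative_eq_intros)

lemma E_nz: "E z \<noteq> 0" by (simp add: E_def)

lemma dL3: "w \<in> slit \<Longrightarrow> w \<noteq> 0 \<Longrightarrow> (polylog 3 has_field_derivative polylog 2 w / w) (at w)"
  using polylog_deriv[of w 2] by (simp add: three_Suc two_Suc)

lemma dL2: "w \<in> slit \<Longrightarrow> w \<noteq> 0 \<Longrightarrow> (polylog 2 has_field_derivative polylog 1 w / w) (at w)"
  using polylog_deriv[of w 1] by (simp add: two_Suc)

lemma dL1: "w \<in> slit \<Longrightarrow> w \<noteq> 0 \<Longrightarrow> (polylog 1 has_field_derivative 1 / (1 - w)) (at w)"
  using polylog_deriv[of w 0] by simp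

lemma dLE:
  assumes "E z \<in> slit"
  shows "((\<lambda>z. polylog 3 (E z)) has_field_derivative 2 * of_real pi * polylog 2 (E z)) (at z)"
    and "((\<lambda>z. polylog 2 (E z)) has_field_derivative 2 * of_real pi * polylog 1 (E z)) (at z)"
    and "((\<lambda>z. polylog 1 (E z)) has_field_derivative 2 * of_real pi * E z / (1 - E z)) (at z)"
proof -
  show "((\<lambda>z. polylog 3 (E z)) has_field_derivative 2 * of_real pi * polylog 2 (E z)) (at z)"
    by (rule DERIV_cong[OF DERIV_chain2[OF dL3[OF assms E_nz] E_deriv]]) (simp add: E_nz field_simps)
  show "((\<lambda>z. polylog 2 (E z)) has_field_derivative 2 * of_real pi * polylog 1 (E z)) (at z)"
    by (rule DERIV_cong[OF DERIV_chain2[OF dL2[OF assms E_nz] E_deriv]]) (simp add: E_nz field_simps)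
  show "((\<lambda>z. polylog 1 (E z)) has_field_derivative 2 * of_real pi * E z / (1 - E z)) (at z)"
    by (rule DERIV_cong[OF DERIV_chain2[OF dL1[OF assms E_nz] E_deriv]]) (simp add: field_simps)
qed

lemma E_ne_1: "E z \<in> slit \<Longrightarrow> E z \<noteq> 1"
  by (auto simp: slit_def)

lemma K_E: "K z = of_real pi * z * (E z + 1) / (E z - 1) - 1"
  by (simp add: K_def E_def)

lemma dH: assumes "E z \<in> slit" shows "(H has_field_derivative H1 z) (at z)"
proof -
  note d = dLE[OF assms]
  show ?thesis unfolding H_def[abs_def]
    by (auto intro!: derivative_eq_intros d simp: H1_def field_simps power2_eq_square power3_eq_cube)
qed

lemma dH1: assumes "E z \<in> slit" shows "(H1 has_field_derivative K z) (at z)"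
proof -
  note d = dLE[OF assms]
  have "1 - E z \<noteq> 0" "E z - 1 \<noteq> 0" using E_ne_1[OF assms] by auto
  thus ?thesis unfolding H1_def[abs_def]
    by (auto intro!: derivative_eq_intros d dLE(3)[OF assms, unfolded One_nat_def] simp del: polylog.simps simp: K_E field_simps)
qed

lemma E_not_slit:
  assumes "E z \<notin> slit"
  shows "0 \<le> Re z \<and> (\<exists>n::int. Im z = of_int n)"
proof -
  from assms have im: "Im (E z) = 0" and re: "1 \<le> Re (E z)" by (auto simp: slit_def)
  define r where "r = Re (E z)"
  have r: "1 \<le> r" using re by (simp add: r_def)
  have "E z = of_real r" using im by (simp add: r_def complex_eq_iff)
  also have "\<dots> = exp (of_real (ln r))" using r by (simp add: exp_of_real)
  finally have "exp (2 * of_real pi * z) = exp (of_real (ln r))" by (simp add: E_def)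
  then obtain n :: int where n: "2 * of_real pi * z = of_real (ln r) + of_real (of_int (2 * n) * pi) * \<i>"
    unfolding exp_eq by blast
  have "2 * pi * Re z = ln r" using arg_cong[OF n, of Re] by simp
  moreover have "ln r \<ge> 0" using r by simp
  ultimately have "0 \<le> 2 * pi * Re z" by simp
  hence "0 \<le> Re z" using pi_gt_zero by (simp add: zero_le_mult_iff)
  moreover have "2 * pi * Im z = 2 * of_int n * pi" using arg_cong[OF n, of Im] by simp
  hence "Im z = of_int n" by simp
  ultimately show ?thesis by blast
qed

definition D0 :: "complex set" where "D0 = {z. norm z < 1 \<and> \<not> (Im z = 0 \<and> 0 \<le> Re z)}"

lemma D0_slit: assumes "z \<in> D0" shows "E z \<in> slit"
proof (rule ccontr)
  assume "E z \<notin> slit"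
  from E_not_slit[OF this] obtain n :: int where n: "0 \<le> Re z" "Im z = of_int n" by blast
  have "\<bar>Im z\<bar> < 1" using assms abs_Im_le_cmod[of z] by (simp add: D0_def)
  hence "n = 0" using n by simp
  thus False using n assms by (simp add: D0_def)
qed

lemma zero_notin_D0: "0 \<notin> D0" by (simp add: D0_def)

lemma open_D0: "open D0"
proof -
  have "D0 = ball 0 1 \<inter> - {z. Im z = 0 \<and> 0 \<le> Re z}" by (auto simp: D0_def)
  moreover have "closed {z::complex. Im z = 0 \<and> 0 \<le> Re z}"
    by (intro closed_Collect_conj closed_Collect_eq closed_Collect_le continuous_intros)
  moreover have "open (ball (0::complex) 1 \<inter> - {z. Im z = 0 \<and> 0 \<le> Re z})"
    by (intro open_Int open_ball open_Compl) fact
  ultimately show ?thesis by simp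
qed

lemma connected_D0: "connected D0"
proof (rule starlike_imp_connected)
  show "starlike D0" unfolding starlike_def
  proof (intro bexI[of _ "-1/2"] ballI subsetI)
    show "-1/2 \<in> D0" by (simp add: D0_def)
    fix p u assume p: "p \<in> D0" and u: "u \<in> closed_segment (-1/2) p"
    have "closed_segment (-1/2) p \<subseteq> ball 0 1"
      by (rule closed_segment_subset) (use p in \<open>auto simp: D0_def\<close>)
    hence nu: "norm u < 1" using u by auto
    from u obtain t where t: "0 \<le> t" "t \<le> 1" "u = (1 - t) *\<^sub>R (-1/2) + t *\<^sub>R p"
      by (auto simp: closed_segment_def)
    have Re: "Re u = - (1 - t) / 2 + t * Re p" unfolding t(3) by (simp add: field_simps)
    have Im: "Im u = t * Im p" unfolding t(3) by simp
    have "\<not> (Im u = 0 \<and> 0 \<le> Re u)"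
    proof
      assume a: "Im u = 0 \<and> 0 \<le> Re u"
      show False
      proof (cases "t = 0")
        case True thus False using a Re by simp
      next
        case False
        hence "Im p = 0" using a Im by simp
        hence "Re p < 0" using p by (auto simp: D0_def)
        hence "t * Re p \<le> 0" using t by (simp add: mult_nonneg_nonpos)
        moreover have "- (1 - t) / 2 \<le> 0" using t by simp
        moreover have "t * Re p < 0 \<or> - (1 - t) / 2 < 0"
          using False t \<open>Re p < 0\<close> by (cases "t = 1") (auto simp: mult_pos_neg)
        ultimately show False using a Re by linarith
      qed
    qed
    thus "u \<in> D0" using nu by (simp add: D0_def)
  qed
qed

lemma ev_neg: "eventually (\<lambda>x. x \<in> {-1<..<0}) (at_left (0::real))"
  by (rule eventually_at_left_real) simp

lemma neg_in_D0: "x \<in> {-1<..<0} \<Longrightarrow> complex_of_real x \<in> D0"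
  by (auto simp: D0_def)

lemma E_of_real_tendsto: "((\<lambda>x. E (of_real x)) \<longlongrightarrow> 1) (at_left (0::real))"
proof -
  have "isCont E 0" using E_deriv DERIV_isCont by blast
  moreover have "((\<lambda>x::real. complex_of_real x) \<longlongrightarrow> 0) (at_left 0)"
    by (rule tendsto_eq_intros refl)+ simp
  ultimately have "((\<lambda>x. E (of_real x)) \<longlongrightarrow> E 0) (at_left (0::real))"
    by (rule isCont_tendsto_compose)
  thus ?thesis by (simp add: E_def)
qed

lemma norm_E_of_real_neg: "x \<le> 0 \<Longrightarrow> norm (E (of_real x)) \<le> 1"
  using pi_gt_zero by (simp add: E_def norm_exp_eq_Re mult_nonneg_nonpos)

lemma polylog_E_left:
  shows "((\<lambda>x. polylog 2 (E (of_real x))) \<longlongrightarrow> polylog 2 1) (at_left (0::real))"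
    and "((\<lambda>x. polylog 3 (E (of_real x))) \<longlongrightarrow> polylog 3 1) (at_left (0::real))"
proof -
  have ev: "\<forall>\<^sub>F x in at_left (0::real). E (of_real x) \<in> cball 0 1"
    using ev_neg by eventually_elim (auto intro: norm_E_of_real_neg)
  show "((\<lambda>x. polylog 2 (E (of_real x))) \<longlongrightarrow> polylog 2 1) (at_left (0::real))"
    by (rule continuous_on_tendsto_compose[OF cont_polylog2_cball E_of_real_tendsto _ ev]) simp
  show "((\<lambda>x. polylog 3 (E (of_real x))) \<longlongrightarrow> polylog 3 1) (at_left (0::real))"
    by (rule continuous_on_tendsto_compose[OF cont_polylog3_cball E_of_real_tendsto _ ev]) simp
qed

lemma x_polylog1_E_left: "((\<lambda>x. of_real x * polylog 1 (E (of_real x))) \<longlongrightarrow> 0) (at_left (0::real))"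
proof -
  have r: "((\<lambda>x::real. x * ln (1 - exp (2 * pi * x))) \<longlongrightarrow> 0) (at_left 0)"
    by real_asymp
  have lim: "((\<lambda>x::real. complex_of_real (- (x * ln (1 - exp (2 * pi * x))))) \<longlongrightarrow> 0) (at_left 0)"
    using tendsto_of_real[OF tendsto_minus[OF r], where 'a=complex] by (simp only: minus_zero of_real_0)
  have ev: "eventually (\<lambda>x. complex_of_real (- (x * ln (1 - exp (2 * pi * x)))) =
      of_real x * polylog 1 (E (of_real x))) (at_left (0::real))"
    using ev_neg
  proof eventually_elim
    case (elim x)
    hence "exp (2 * pi * x) < 1" using pi_gt_zero by (simp add: mult_pos_neg)
    hence "1 - E (of_real x) = of_real (1 - exp (2 * pi * x))"
      by (simp add: E_def exp_of_real[symmetric])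
    moreover have "Ln (of_real (1 - exp (2 * pi * x))) = of_real (ln (1 - exp (2 * pi * x)))"
      using \<open>exp (2 * pi * x) < 1\<close> by (intro Ln_of_real) simp
    ultimately show ?case by simp
  qed
  show ?thesis by (rule Lim_transform_eventually[OF lim ev])
qed

lemma ox_left: "((\<lambda>x::real. complex_of_real x) \<longlongrightarrow> 0) (at_left 0)"
  by (rule tendsto_eq_intros refl)+ simp

lemma H1_left: "((\<lambda>x. H1 (of_real x)) \<longlongrightarrow> 0) (at_left (0::real))"
proof -
  have l: "((\<lambda>x. H1 (of_real x)) \<longlongrightarrow> - 0 - of_real pi * 0 ^ 2 / 2 - of_real pi / 12
           + polylog 2 1 / (2 * of_real pi) - 0) (at_left (0::real))"
    unfolding H1_def
    by (intro tendsto_intros ox_left polylog_E_left(1) x_polylog1_E_left) simp_all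
  have e: "- 0 - of_real pi * 0 ^ 2 / 2 - of_real pi / 12 + polylog 2 1 / (2 * of_real pi) - 0 = (0::complex)"
    by (simp add: polylog2_1' field_simps power2_eq_square)
  show ?thesis using l unfolding e .
qed

lemma H_left: "((\<lambda>x. H (of_real x)) \<longlongrightarrow> 0) (at_left (0::real))"
proof -
  have "((\<lambda>x. H (of_real x)) \<longlongrightarrow> - (0 ^ 2) / 2 - of_real pi * 0 ^ 3 / 6 - of_real pi * 0 / 12 - zeta 3 / (2 * of_real pi ^ 2)
         + polylog 3 1 / (2 * of_real pi ^ 2) - 0 * polylog 2 1 / (2 * of_real pi)) (at_left (0::real))"
    unfolding H_def
    by (intro tendsto_intros ox_left polylog_E_left) simp_all
  moreover have "- (0 ^ 2) / 2 - of_real pi * 0 ^ 3 / 6 - of_real pi * 0 / 12 - zeta 3 / (2 * of_real pi ^ 2)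
         + polylog 3 1 / (2 * of_real pi ^ 2) - 0 * polylog 2 1 / (2 * of_real pi) = (0::complex)"
    by (simp add: polylog3_1')
  ultimately show ?thesis by simp
qed

lemma G1_left: "((\<lambda>x. G1 (of_real x)) \<longlongrightarrow> 0) (at_left (0::real))"
proof -
  have "isCont G1 0" using G1_deriv[of 0] DERIV_isCont by simp
  from isCont_tendsto_compose[OF this ox_left] show ?thesis by simp
qed

lemma G_left: "((\<lambda>x. G (of_real x)) \<longlongrightarrow> 0) (at_left (0::real))"
proof -
  have "isCont G 0" using G_deriv[of 0] DERIV_isCont by simp
  from isCont_tendsto_compose[OF this ox_left] show ?thesis by simp
qed

lemma const_from_left:
  fixes f :: "complex \<Rightarrow> complex"
  assumes "\<And>z. z \<in> D0 \<Longrightarrow> f z = c" "((\<lambda>x. f (of_real x)) \<longlongrightarrow> 0) (at_left (0::real))"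
  shows "c = 0"
proof -
  have "eventually (\<lambda>x. f (of_real x) = c) (at_left (0::real))"
    using ev_neg by eventually_elim (rule assms(1)[OF neg_in_D0])
  hence "((\<lambda>x. f (of_real x)) \<longlongrightarrow> c) (at_left (0::real))"
    by (rule tendsto_eventually)
  from tendsto_unique[OF _ this assms(2)] show ?thesis by simp
qed

lemma GH_D0:
  assumes "z \<in> D0"
  shows "G z = H z"
proof -
  have nz: "w \<noteq> 0" and nw: "norm w < 1" and ws: "E w \<in> slit" if "w \<in> D0" for w
    using that zero_notin_D0 D0_slit by (auto simp: D0_def)
  have d1: "DERIV (\<lambda>w. G1 w - H1 w) w :> 0" if "w \<in> D0" for w
    using DERIV_diff[OF G1_deriv[OF nw[OF that]] dH1[OF ws[OF that]]] G2_K[OF nz[OF that] nw[OF that]] by simp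
  have "continuous_on D0 (\<lambda>w. G1 w - H1 w)"
    by (rule continuous_at_imp_continuous_on) (use d1 DERIV_isCont in blast)
  then obtain c1 where c1: "\<And>w. w \<in> D0 \<Longrightarrow> G1 w - H1 w = c1"
    using DERIV_zero_connected_constant[OF connected_D0 open_D0, of "{}" "\<lambda>w. G1 w - H1 w"] d1 by auto
  have l1: "((\<lambda>x. G1 (of_real x) - H1 (of_real x)) \<longlongrightarrow> 0) (at_left (0::real))"
    using tendsto_diff[OF G1_left H1_left] by simp
  have "c1 = 0" by (rule const_from_left[OF c1 l1])
  have d0: "DERIV (\<lambda>w. G w - H w) w :> 0" if "w \<in> D0" for w
    using DERIV_diff[OF G_deriv[OF nw[OF that]] dH[OF ws[OF that]]] c1[OF that] \<open>c1 = 0\<close> by simp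
  have "continuous_on D0 (\<lambda>w. G w - H w)"
    by (rule continuous_at_imp_continuous_on) (use d0 DERIV_isCont in blast)
  then obtain c0 where c0: "\<And>w. w \<in> D0 \<Longrightarrow> G w - H w = c0"
    using DERIV_zero_connected_constant[OF connected_D0 open_D0, of "{}" "\<lambda>w. G w - H w"] d0 by auto
  have l0: "((\<lambda>x. G (of_real x) - H (of_real x)) \<longlongrightarrow> 0) (at_left (0::real))"
    using tendsto_diff[OF G_left H_left] by simp
  have "c0 = 0" by (rule const_from_left[OF c0 l0])
  thus ?thesis using c0[OF assms] by simp
qed

lemma E_of_real: "E (of_real t) = of_real (exp (2 * pi * t))"
  by (simp add: E_def exp_of_real[symmetric])

lemma exp_vd: "((\<lambda>t. exp (2 * pi * t)) has_vector_derivative (2 * pi * exp (2 * pi * t))) (at t)"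
proof -
  have "((\<lambda>t. exp (2 * pi * t)) has_real_derivative (exp (2 * pi * t) * (2 * pi))) (at t)"
    by (auto intro!: derivative_eq_intros)
  thus ?thesis by (simp add: has_real_derivative_iff_has_vector_derivative mult.commute)
qed

lemma exp_gt1: "0 < t \<Longrightarrow> 1 < exp (2 * pi * t)"
  using pi_gt_zero by simp

lemma L3r_vd:
  assumes "0 < t"
  shows "((\<lambda>t. polylog 3 (of_real (exp (2 * pi * t)))) has_vector_derivative
           (2 * of_real pi * polylog 2 (of_real (exp (2 * pi * t))))) (at t)"
proof -
  have y: "1 < exp (2 * pi * t)" by (rule exp_gt1[OF assms])
  show ?thesis
    using vector_diff_chain_at[OF exp_vd polylog3_vd[OF y]] unfolding o_def
    by (rule has_vector_derivative_eq_rhs) (simp add: scaleR_conv_of_real field_simps)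
qed

lemma L2r_vd:
  assumes "0 < t"
  shows "((\<lambda>t. polylog 2 (of_real (exp (2 * pi * t)))) has_vector_derivative
           (2 * of_real pi * polylog (Suc 0) (of_real (exp (2 * pi * t))))) (at t)"
proof -
  have y: "1 < exp (2 * pi * t)" by (rule exp_gt1[OF assms])
  show ?thesis
    using vector_diff_chain_at[OF exp_vd polylog2_vd[OF y]] unfolding o_def
    by (rule has_vector_derivative_eq_rhs) (simp add: g1_def scaleR_conv_of_real field_simps)
qed

lemma L1r_vd:
  assumes "0 < t"
  shows "((\<lambda>t. polylog (Suc 0) (of_real (exp (2 * pi * t)))) has_vector_derivative
           (of_real (2 * pi * exp (2 * pi * t)) / (1 - of_real (exp (2 * pi * t))))) (at t)"
proof -
  have y: "1 < exp (2 * pi * t)" by (rule exp_gt1[OF assms])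
  show ?thesis
    using vector_diff_chain_at[OF exp_vd polylog1_vd[OF y]] unfolding o_def
    by (rule has_vector_derivative_eq_rhs) (simp add: scaleR_conv_of_real)
qed

lemma ox_vd: "((\<lambda>t. complex_of_real t) has_vector_derivative 1) (at t)"
  using has_vector_derivative_of_real[OF DERIV_ident] by simp

lemma hvd:
  assumes "0 < t"
  shows "((\<lambda>t. H (of_real t)) has_vector_derivative H1 (of_real t)) (at t)"
proof -
  define P where "P = (\<lambda>z::complex. - (z ^ 2) / 2 - of_real pi * z ^ 3 / 6 - of_real pi * z / 12 - zeta 3 / (2 * of_real pi ^ 2))"
  have "(P has_field_derivative (- of_real t - of_real pi * of_real t ^ 2 / 2 - of_real pi / 12)) (at (of_real t))"
    unfolding P_def by (auto intro!: derivative_eq_intros simp: field_simps power2_eq_square)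
  hence dP: "((\<lambda>t. P (of_real t)) has_vector_derivative (- of_real t - of_real pi * of_real t ^ 2 / 2 - of_real pi / 12)) (at t)"
    by (rule has_vector_derivative_real_field)
  have d: "((\<lambda>t. P (of_real t) + polylog 3 (of_real (exp (2 * pi * t))) / (2 * of_real pi ^ 2)
            - of_real t * polylog 2 (of_real (exp (2 * pi * t))) / (2 * of_real pi)) has_vector_derivative
        ((- of_real t - of_real pi * of_real t ^ 2 / 2 - of_real pi / 12)
          + (2 * of_real pi * polylog 2 (of_real (exp (2 * pi * t)))) / (2 * of_real pi ^ 2)
          - (of_real t * (2 * of_real pi * polylog (Suc 0) (of_real (exp (2 * pi * t))))
             + 1 * polylog 2 (of_real (exp (2 * pi * t)))) / (2 * of_real pi))) (at t)"
    by (intro has_vector_derivative_diff has_vector_derivative_add dP has_vector_derivative_divide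
        has_vector_derivative_mult ox_vd L3r_vd L2r_vd assms)
  have e: "(\<lambda>t. H (of_real t)) = (\<lambda>t. P (of_real t) + polylog 3 (of_real (exp (2 * pi * t))) / (2 * of_real pi ^ 2)
            - of_real t * polylog 2 (of_real (exp (2 * pi * t))) / (2 * of_real pi))"
    by (simp add: H_def P_def E_of_real fun_eq_iff)
  show ?thesis unfolding e using d
    by (rule has_vector_derivative_eq_rhs) (simp add: H1_def E_of_real field_simps power2_eq_square)
qed

lemma hvd1:
  assumes "0 < t"
  shows "((\<lambda>t. H1 (of_real t)) has_vector_derivative K (of_real t)) (at t)"
proof -
  define Q where "Q = (\<lambda>z::complex. - z - of_real pi * z ^ 2 / 2 - of_real pi / 12)"
  have "(Q has_field_derivative (- 1 - of_real pi * of_real t)) (at (of_real t))"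
    unfolding Q_def by (auto intro!: derivative_eq_intros simp: field_simps power2_eq_square)
  hence dQ: "((\<lambda>t. Q (of_real t)) has_vector_derivative (- 1 - of_real pi * of_real t)) (at t)"
    by (rule has_vector_derivative_real_field)
  define y where "y = exp (2 * pi * t)"
  have y1: "1 < y" unfolding y_def by (rule exp_gt1[OF assms])
  have d: "((\<lambda>t. Q (of_real t) + polylog 2 (of_real (exp (2 * pi * t))) / (2 * of_real pi)
            - of_real t * polylog (Suc 0) (of_real (exp (2 * pi * t)))) has_vector_derivative
        ((- 1 - of_real pi * of_real t)
          + (2 * of_real pi * polylog (Suc 0) (of_real (exp (2 * pi * t)))) / (2 * of_real pi)
          - (of_real t * (of_real (2 * pi * exp (2 * pi * t)) / (1 - of_real (exp (2 * pi * t))))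
             + 1 * polylog (Suc 0) (of_real (exp (2 * pi * t)))))) (at t)"
    by (intro has_vector_derivative_diff has_vector_derivative_add dQ has_vector_derivative_divide
        has_vector_derivative_mult ox_vd L1r_vd L2r_vd assms)
  have e: "(\<lambda>t. H1 (of_real t)) = (\<lambda>t. Q (of_real t) + polylog 2 (of_real (exp (2 * pi * t))) / (2 * of_real pi)
            - of_real t * polylog (Suc 0) (of_real (exp (2 * pi * t))))"
    by (simp add: H1_def Q_def E_of_real fun_eq_iff)
  have ny: "1 - complex_of_real y \<noteq> 0" "complex_of_real y - 1 \<noteq> 0" using y1 by (auto simp: complex_eq_iff)
  show ?thesis unfolding e using d
    by (rule has_vector_derivative_eq_rhs)
       (simp only: K_E E_of_real, unfold y_def[symmetric], use ny in \<open>simp add: field_simps\<close>)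
qed

lemma L1_gt1: "1 < y \<Longrightarrow> polylog (Suc 0) (of_real y) = - (of_real (ln (y - 1)) + of_real pi * \<i>)"
proof -
  assume y: "1 < y"
  have "1 - complex_of_real y = of_real (1 - y)" by simp
  hence "Ln (1 - complex_of_real y) = of_real (ln (y - 1)) + of_real pi * \<i>"
    using Ln_of_real'[of "1 - y"] y by simp
  thus ?thesis by simp
qed

lemma ox_right: "((\<lambda>x::real. complex_of_real x) \<longlongrightarrow> 0) (at_right 0)"
  by (rule tendsto_eq_intros refl)+ simp

lemma ev_pos: "eventually (\<lambda>t. t \<in> {0<..<1}) (at_right (0::real))"
  by (rule eventually_at_right_real) simp

lemma exp_right: "((\<lambda>t. exp (2 * pi * t)) \<longlongrightarrow> 1) (at_right (0::real))"
  by (rule tendsto_eq_intros refl)+ simp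

lemma ev_exp_in: "eventually (\<lambda>t. exp (2 * pi * t) \<in> {0..exp (2 * pi)}) (at_right (0::real))"
  using ev_pos by eventually_elim (use pi_gt_zero in auto)

lemma L2r_right: "((\<lambda>t. polylog 2 (of_real (exp (2 * pi * t)))) \<longlongrightarrow> polylog 2 1) (at_right (0::real))"
  using continuous_on_tendsto_compose[OF cont_polylog2_real[of "exp (2 * pi)"] exp_right _ ev_exp_in] by simp

lemma L3r_right: "((\<lambda>t. polylog 3 (of_real (exp (2 * pi * t)))) \<longlongrightarrow> polylog 3 1) (at_right (0::real))"
  using continuous_on_tendsto_compose[OF cont_polylog3_real[of "exp (2 * pi)"] exp_right _ ev_exp_in] by simp

lemma xL1_right: "((\<lambda>t. of_real t * polylog (Suc 0) (of_real (exp (2 * pi * t)))) \<longlongrightarrow> 0) (at_right (0::real))"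
proof -
  have r: "((\<lambda>t::real. t * ln (exp (2 * pi * t) - 1)) \<longlongrightarrow> 0) (at_right 0)"
    by real_asymp
  have lim: "((\<lambda>t::real. - (complex_of_real (t * ln (exp (2 * pi * t) - 1)) + complex_of_real t * (of_real pi * \<i>))) \<longlongrightarrow> - (of_real 0 + 0 * (of_real pi * \<i>))) (at_right 0)"
    by (intro tendsto_intros r ox_right)
  have ev: "eventually (\<lambda>t. - (complex_of_real (t * ln (exp (2 * pi * t) - 1)) + complex_of_real t * (of_real pi * \<i>)) =
      of_real t * polylog (Suc 0) (of_real (exp (2 * pi * t)))) (at_right (0::real))"
    using ev_pos
  proof eventually_elim
    case (elim t)
    hence "1 < exp (2 * pi * t)" by (intro exp_gt1) simp
    thus ?case by (simp only: L1_gt1) (simp add: algebra_simps)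
  qed
  show ?thesis using Lim_transform_eventually[OF lim ev] by simp
qed

lemma H1_right: "((\<lambda>x. H1 (of_real x)) \<longlongrightarrow> 0) (at_right (0::real))"
proof -
  have e: "(\<lambda>t. H1 (of_real t)) = (\<lambda>t. - of_real t - of_real pi * of_real t ^ 2 / 2 - of_real pi / 12
      + polylog 2 (of_real (exp (2 * pi * t))) / (2 * of_real pi)
      - of_real t * polylog (Suc 0) (of_real (exp (2 * pi * t))))"
    by (simp add: H1_def E_of_real fun_eq_iff)
  have l: "((\<lambda>x. H1 (of_real x)) \<longlongrightarrow> - 0 - of_real pi * 0 ^ 2 / 2 - of_real pi / 12
           + polylog 2 1 / (2 * of_real pi) - 0) (at_right (0::real))"
    unfolding e by (intro tendsto_intros ox_right L2r_right xL1_right) simp_all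
  have z: "- 0 - of_real pi * 0 ^ 2 / 2 - of_real pi / 12 + polylog 2 1 / (2 * of_real pi) - 0 = (0::complex)"
    by (simp add: polylog2_1' field_simps power2_eq_square)
  show ?thesis using l unfolding z .
qed

lemma H_right: "((\<lambda>x. H (of_real x)) \<longlongrightarrow> 0) (at_right (0::real))"
proof -
  have e: "(\<lambda>t. H (of_real t)) = (\<lambda>t. - (of_real t ^ 2) / 2 - of_real pi * of_real t ^ 3 / 6 - of_real pi * of_real t / 12
      - zeta 3 / (2 * of_real pi ^ 2) + polylog 3 (of_real (exp (2 * pi * t))) / (2 * of_real pi ^ 2)
      - of_real t * polylog 2 (of_real (exp (2 * pi * t))) / (2 * of_real pi))"
    by (simp add: H_def E_of_real fun_eq_iff)
  have l: "((\<lambda>x. H (of_real x)) \<longlongrightarrow> - (0 ^ 2) / 2 - of_real pi * 0 ^ 3 / 6 - of_real pi * 0 / 12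
      - zeta 3 / (2 * of_real pi ^ 2) + polylog 3 1 / (2 * of_real pi ^ 2) - 0 * polylog 2 1 / (2 * of_real pi)) (at_right (0::real))"
    unfolding e by (intro tendsto_intros ox_right L2r_right L3r_right) simp_all
  have z: "- (0 ^ 2) / 2 - of_real pi * 0 ^ 3 / 6 - of_real pi * 0 / 12
      - zeta 3 / (2 * of_real pi ^ 2) + polylog 3 1 / (2 * of_real pi ^ 2) - 0 * polylog 2 1 / (2 * of_real pi) = (0::complex)"
    by (simp add: polylog3_1')
  show ?thesis using l unfolding z .
qed

lemma G1_right: "((\<lambda>x. G1 (of_real x)) \<longlongrightarrow> 0) (at_right (0::real))"
proof -
  have "isCont G1 0" using G1_deriv[of 0] DERIV_isCont by simp
  from isCont_tendsto_compose[OF this ox_right] show ?thesis by simp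
qed

lemma G_right: "((\<lambda>x. G (of_real x)) \<longlongrightarrow> 0) (at_right (0::real))"
proof -
  have "isCont G 0" using G_deriv[of 0] DERIV_isCont by simp
  from isCont_tendsto_compose[OF this ox_right] show ?thesis by simp
qed

lemma const_from_right:
  fixes f :: "real \<Rightarrow> complex"
  assumes "\<And>t. t \<in> {0<..<1} \<Longrightarrow> f t = c" "(f \<longlongrightarrow> 0) (at_right 0)"
  shows "c = 0"
proof -
  have "eventually (\<lambda>t. f t = c) (at_right (0::real))"
    using ev_pos by eventually_elim (rule assms(1))
  hence "(f \<longlongrightarrow> c) (at_right 0)" by (rule tendsto_eventually)
  from tendsto_unique[OF _ this assms(2)] show ?thesis by simp
qed

lemma GH_pos:
  assumes "0 < x" "x \<le> 1"
  shows "G (of_real x) = H (of_real x)"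
proof -
  define S where "S = {0<..<(1::real)}"
  have nt: "norm (complex_of_real t) < 1" "complex_of_real t \<noteq> 0" if "t \<in> S" for t
    using that by (auto simp: S_def)
  have d1: "((\<lambda>t. G1 (of_real t) - H1 (of_real t)) has_vector_derivative 0) (at t)" if "t \<in> S" for t
  proof -
    have "((\<lambda>t. G1 (of_real t) - H1 (of_real t)) has_vector_derivative (G2 (of_real t) - K (of_real t))) (at t)"
      by (intro has_vector_derivative_diff has_vector_derivative_real_field G1_deriv hvd1 nt[OF that])
         (use that in \<open>simp add: S_def\<close>)
    thus ?thesis using G2_K[OF nt(2)[OF that] nt(1)[OF that]] by simp
  qed
  obtain c1 where c1: "\<And>t. t \<in> S \<Longrightarrow> G1 (of_real t) - H1 (of_real t) = c1"
    using has_vector_derivative_zero_constant[of S "\<lambda>t. G1 (of_real t) - H1 (of_real t)"] d1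
    by (metis S_def convex_real_interval(8) has_vector_derivative_at_within)
  have l1: "((\<lambda>t. G1 (of_real t) - H1 (of_real t)) \<longlongrightarrow> 0) (at_right (0::real))"
    using tendsto_diff[OF G1_right H1_right] by simp
  have "c1 = 0" by (rule const_from_right[OF c1[unfolded S_def] l1])
  have d0: "((\<lambda>t. G (of_real t) - H (of_real t)) has_vector_derivative 0) (at t)" if "t \<in> S" for t
  proof -
    have "((\<lambda>t. G (of_real t) - H (of_real t)) has_vector_derivative (G1 (of_real t) - H1 (of_real t))) (at t)"
      by (intro has_vector_derivative_diff has_vector_derivative_real_field G_deriv hvd nt[OF that])
         (use that in \<open>simp add: S_def\<close>)
    thus ?thesis using c1[OF that] \<open>c1 = 0\<close> by simp
  qed
  obtain c0 where c0: "\<And>t. t \<in> S \<Longrightarrow> G (of_real t) - H (of_real t) = c0"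
    using has_vector_derivative_zero_constant[of S "\<lambda>t. G (of_real t) - H (of_real t)"] d0
    by (metis S_def convex_real_interval(8) has_vector_derivative_at_within)
  have l0: "((\<lambda>t. G (of_real t) - H (of_real t)) \<longlongrightarrow> 0) (at_right (0::real))"
    using tendsto_diff[OF G_right H_right] by simp
  have "c0 = 0" by (rule const_from_right[OF c0[unfolded S_def] l0])
  hence eq: "G (of_real t) = H (of_real t)" if "t \<in> S" for t using c0[OF that] by simp
  show ?thesis
  proof (cases "x < 1")
    case True thus ?thesis using eq assms by (simp add: S_def)
  next
    case False
    hence x1: "x = 1" using assms by simp
    have ev: "eventually (\<lambda>t. t \<in> {0<..<1}) (at_left (1::real))"
      by (rule eventually_at_left_real) simp
    have lG: "((\<lambda>t. G (of_real t)) \<longlongrightarrow> G 1) (at_left (1::real))"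
    proof (rule continuous_on_tendsto_compose[OF G_cont])
      show "((\<lambda>t::real. complex_of_real t) \<longlongrightarrow> 1) (at_left 1)"
        by (rule tendsto_eq_intros refl)+ simp
      show "\<forall>\<^sub>F t in at_left 1. complex_of_real t \<in> cball 0 1"
        using ev by eventually_elim auto
    qed simp
    have "continuous (at 1) (\<lambda>t. H (of_real t))"
      using has_vector_derivative_continuous[OF hvd[of 1]] by simp
    hence "((\<lambda>t. H (of_real t)) \<longlongrightarrow> H 1) (at 1)"
      by (simp add: isCont_def)
    hence lH: "((\<lambda>t. H (of_real t)) \<longlongrightarrow> H 1) (at_left (1::real))"
      by (simp add: filterlim_at_split)
    have "eventually (\<lambda>t. G (of_real t) - H (of_real t) = 0) (at_left (1::real))"
      using ev by eventually_elim (simp add: eq S_def)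
    hence "((\<lambda>t. G (of_real t) - H (of_real t)) \<longlongrightarrow> 0) (at_left (1::real))"
      by (rule tendsto_eventually)
    from tendsto_unique[OF _ tendsto_diff[OF lG lH] this] show ?thesis using x1 by simp
  qed
qed

lemma polylog_E_circle:
  assumes "norm z = 1" "\<not> (Im z = 0 \<and> 0 \<le> Re z)" "k \<in> {2, 3}"
  shows "((\<lambda>r. polylog k (E (of_real r * z))) \<longlongrightarrow> polylog k (E z)) (at_left (1::real))"
proof -
  have lg: "((\<lambda>r::real. of_real r * z) \<longlongrightarrow> z) (at_left 1)"
    by (rule tendsto_eq_intros refl)+ simp
  have "isCont E z" using E_deriv DERIV_isCont by blast
  hence lE: "((\<lambda>r::real. E (of_real r * z)) \<longlongrightarrow> E z) (at_left 1)"
    by (rule isCont_tendsto_compose[OF _ lg])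
  show ?thesis
  proof (cases "E z \<in> slit")
    case True
    have "isCont (polylog k) (E z)"
      using assms(3) DERIV_isCont[OF dL3[OF True E_nz]] DERIV_isCont[OF dL2[OF True E_nz]] by auto
    thus ?thesis by (rule isCont_tendsto_compose[OF _ lE])
  next
    case False
    from E_not_slit[OF False] obtain n :: int where n: "0 \<le> Re z" "Im z = of_int n" by blast
    have "n \<noteq> 0" using n assms(2) by auto
    hence "1 \<le> \<bar>Im z\<bar>" using n by simp
    hence "1 \<le> Im z ^ 2" by (metis abs_ge_zero abs_le_square_iff abs_one power_one)
    moreover have "Re z ^ 2 + Im z ^ 2 = 1" using assms(1) by (simp add: cmod_def)
    ultimately have "Re z ^ 2 = 0" using zero_le_power2[of "Re z"] by linarith
    hence "Re z = 0" by simp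
    hence inb: "E (of_real r * z) \<in> cball 0 1" for r
      by (simp add: E_def norm_exp_eq_Re)
    have cont: "continuous_on (cball 0 1) (polylog k)"
      using assms(3) cont_polylog2_cball cont_polylog3_cball by auto
    have "E z \<in> cball 0 1" using inb[of 1] by simp
    thus ?thesis by (rule continuous_on_tendsto_compose[OF cont lE]) (use inb in simp)
  qed
qed

lemma GH_circle:
  assumes "norm z = 1" "\<not> (Im z = 0 \<and> 0 \<le> Re z)"
  shows "G z = H z"
proof -
  have lg: "((\<lambda>r::real. of_real r * z) \<longlongrightarrow> z) (at_left 1)"
    by (rule tendsto_eq_intros refl)+ simp
  have ev: "eventually (\<lambda>r. r \<in> {0<..<1}) (at_left (1::real))"
    by (rule eventually_at_left_real) simp
  have inD0: "of_real r * z \<in> D0" if "r \<in> {0<..<1}" for r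
    using that assms by (auto simp: D0_def norm_mult zero_le_mult_iff)
  have lG: "((\<lambda>r. G (of_real r * z)) \<longlongrightarrow> G z) (at_left (1::real))"
  proof (rule continuous_on_tendsto_compose[OF G_cont lg])
    show "z \<in> cball 0 1" using assms by simp
    show "\<forall>\<^sub>F r in at_left 1. of_real r * z \<in> cball 0 1"
      using ev by eventually_elim (use assms in \<open>auto simp: norm_mult\<close>)
  qed
  have lH: "((\<lambda>r. H (of_real r * z)) \<longlongrightarrow> H z) (at_left (1::real))"
    unfolding H_def
    by (intro tendsto_intros lg polylog_E_circle assms) simp_all
  have "eventually (\<lambda>r. G (of_real r * z) - H (of_real r * z) = 0) (at_left (1::real))"
    using ev by eventually_elim (simp add: GH_D0 inD0)
  hence "((\<lambda>r. G (of_real r * z) - H (of_real r * z)) \<longlongrightarrow> 0) (at_left (1::real))"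
    by (rule tendsto_eventually)
  from tendsto_unique[OF _ tendsto_diff[OF lG lH] this] show ?thesis by simp
qed

theorem theorem14:
  fixes z :: complex
  assumes "0 < norm z" and "norm z \<le> 1"
  shows "(\<lambda>j::nat. (-1) ^ j * zeta (of_nat (2 * Suc j)) * z ^ (2 * Suc j)
            / (of_nat (2 * Suc j + 1) * of_nat (Suc j + 1)))
         sums (- 1/2 - of_real pi * z / 6 - of_real pi / (12 * z)
               - zeta 3 / (2 * of_real pi ^ 2 * z ^ 2)
               + polylog 3 (exp (2 * of_real pi * z)) / (2 * of_real pi ^ 2 * z ^ 2)
               - polylog 2 (exp (2 * of_real pi * z)) / (2 * of_real pi * z))"
proof -
  have z0: "z \<noteq> 0" using assms by auto
  have GH: "G z = H z"
  proof (cases "Im z = 0 \<and> 0 \<le> Re z")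
    case True
    hence "z = of_real (Re z)" by (simp add: complex_eq_iff)
    moreover have "0 < Re z" using True z0 by (auto simp: complex_eq_iff)
    moreover have "Re z \<le> 1" using assms(2) complex_Re_le_cmod[of z] by linarith
    ultimately show ?thesis using GH_pos[of "Re z"] by metis
  next
    case False
    show ?thesis
    proof (cases "norm z < 1")
      case True
      thus ?thesis using False by (intro GH_D0) (simp add: D0_def)
    next
      case False': False
      hence "norm z = 1" using assms by simp
      thus ?thesis using False by (rule GH_circle)
    qed
  qed
  have "H z / z ^ 2 = - 1/2 - of_real pi * z / 6 - of_real pi / (12 * z)
               - zeta 3 / (2 * of_real pi ^ 2 * z ^ 2)
               + polylog 3 (exp (2 * of_real pi * z)) / (2 * of_real pi ^ 2 * z ^ 2)
               - polylog 2 (exp (2 * of_real pi * z)) / (2 * of_real pi * z)"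
    using z0 by (simp add: H_def E_def field_simps power2_eq_square power3_eq_cube)
  with LHS_sums[OF assms(2) z0] GH show ?thesis by simp
qed

end
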